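(* Let $\Omega$ be a bounded domain in $\mathbb{R}^N$ containing the origin, $1<p<N$, $0<\sigma<p$, $p^\ast(\sigma) = (N-\sigma)p/(N-p)$, let $k\in\mathbb{N}$ with $\lambda_k<\lambda_{k+1}$, and let $\lambda_k\le\lambda<\lambda_{k+1}$. Let $C_0,\rho_0,\eta$ and $C_\rho = \{\pi_{\mathcal{M}}(u_\rho):u\in C_0\}$ be as in the context, and let $c_1>0$ be a constant such that $C_\rho\subset\Psi^{\lambda_k+c_1\rho^{N-p}}$ for all $\rho\in(0,\rho_0/2]$. Let $E_0(u) = \int_\Omega(\frac1p|\nabla u|^p - \frac\lambda p|u|^p - \frac1{p^\ast(\sigma)}|u|^{p^\ast(\sigma)}|x|^{-\sigma})dx$. Then there is a constant $c_{13}>0$ such that for every $\rho\in(0,\rho_0/2]$: \[ \sup_{v\in C_\rho,\ t\ge0}E_0(tv)\le\begin{cases}0 & \text{if }\lambda_k + c_1\rho^{N-p}\le\lambda<\lambda_{k+1},\\ c_{13}\,\rho^{(N-\sigma)(N-p)/(p-\sigma)} & \text{if }\lambda=\lambda_k.\end{cases} \]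
   Context: Work in $W^{1,p}_0(\Omega)$ with norm $\|u\| = \|\nabla u\|_{L^p}$. $\mathcal{M} = \{u:\|u\|^p=p\}$, $\Psi(u) = p/\|u\|_{L^p}^p$ on $\mathcal{M}$, $\Psi^a = \{u\in\mathcal{M}:\Psi(u)\le a\}$, $\pi_{\mathcal{M}}(u) = p^{1/p}u/\|u\|$. $i(\cdot)$ is the Fadell–Rabinowitz $\mathbb{Z}_2$-cohomological index, and $\lambda_k = \inf\{\sup_M\Psi: M\subset\mathcal{M}\text{ symmetric}, i(M)\ge k\}$. $C_0$ is a compact symmetric subset of $\Psi^{\lambda_k}$ with $i(C_0)=k$, bounded in $L^\infty(\Omega)$ and in $C^1(K)$ for each compact $K\subset\Omega$. $\rho_0 = \operatorname{dist}(0,\partial\Omega)$; $\eta:[0,\infty)\to[0,1]$ smooth, $\eta=0$ on $[0,3/4]$, $\eta=1$ on $[1,\infty)$; $u_\rho(x) = \eta(|x|/\rho)u(x)$. *)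

theory Defs
  imports "HOL-Analysis.Analysis"
begin

fun Ck_on :: "'a::euclidean_space set \<Rightarrow> nat \<Rightarrow> ('a \<Rightarrow> real) \<Rightarrow> bool" where
  "Ck_on S 0 f = continuous_on S f"
| "Ck_on S (Suc n) f =
     ((\<forall>x\<in>S. f differentiable (at x)) \<and> continuous_on S f \<and>
      (\<forall>i\<in>Basis. Ck_on S n (\<lambda>x. frechet_derivative f (at x) i)))"

definition smooth_fun_on :: "'a::euclidean_space set \<Rightarrow> ('a \<Rightarrow> real) \<Rightarrow> bool" where
  "smooth_fun_on S f \<longleftrightarrow> (\<forall>n. Ck_on S n f)"

definition grad :: "('a::euclidean_space \<Rightarrow> real) \<Rightarrow> 'a \<Rightarrow> 'a" where
  "grad f x = (\<Sum>i\<in>Basis. frechet_derivative f (at x) i *\<^sub>R i)"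

definition test_fun :: "'a::euclidean_space set \<Rightarrow> ('a \<Rightarrow> real) \<Rightarrow> bool" where
  "test_fun \<Omega> \<phi> \<longleftrightarrow> smooth_fun_on UNIV \<phi> \<and>
     compact (closure {x. \<phi> x \<noteq> 0}) \<and> closure {x. \<phi> x \<noteq> 0} \<subseteq> \<Omega>"

text \<open>u (extended by zero outside \<Omega>) lies in W^{1,p}_0(\<Omega>), the closure of
  C_c^\<infinity>(\<Omega>) in the W^{1,p} norm, with (weak) gradient g.\<close>
definition W0_grad :: "'a::euclidean_space set \<Rightarrow> real \<Rightarrow> ('a \<Rightarrow> real) \<Rightarrow> ('a \<Rightarrow> 'a) \<Rightarrow> bool" where
  "W0_grad \<Omega> p u g \<longleftrightarrow>
     u \<in> borel_measurable lborel \<and> g \<in> borel_measurable lborel \<and>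
     (\<forall>x. x \<notin> \<Omega> \<longrightarrow> u x = 0) \<and>
     (\<exists>\<phi>. (\<forall>n. test_fun \<Omega> (\<phi> n)) \<and>
        (\<lambda>n. \<integral>\<^sup>+x. ennreal (\<bar>\<phi> n x - u x\<bar> powr p) \<partial>lborel) \<longlonglongrightarrow> 0 \<and>
        (\<lambda>n. \<integral>\<^sup>+x. ennreal (norm (grad (\<phi> n) x - g x) powr p) \<partial>lborel) \<longlonglongrightarrow> 0)"

definition W0 :: "'a::euclidean_space set \<Rightarrow> real \<Rightarrow> ('a \<Rightarrow> real) set" where
  "W0 \<Omega> p = {u. \<exists>g. W0_grad \<Omega> p u g}"

definition gradW :: "'a::euclidean_space set \<Rightarrow> real \<Rightarrow> ('a \<Rightarrow> real) \<Rightarrow> 'a \<Rightarrow> 'a" where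
  "gradW \<Omega> p u = (SOME g. W0_grad \<Omega> p u g)"

definition normW :: "'a::euclidean_space set \<Rightarrow> real \<Rightarrow> ('a \<Rightarrow> real) \<Rightarrow> real" where
  "normW \<Omega> p u = (\<integral>x. norm (gradW \<Omega> p u x) powr p \<partial>lborel) powr (1 / p)"

definition Lp_pow :: "real \<Rightarrow> ('a::euclidean_space \<Rightarrow> real) \<Rightarrow> real" where
  "Lp_pow p u = (\<integral>x. \<bar>u x\<bar> powr p \<partial>lborel)"

definition distW :: "'a::euclidean_space set \<Rightarrow> real \<Rightarrow> ('a \<Rightarrow> real) \<Rightarrow> ('a \<Rightarrow> real) \<Rightarrow> real" where
  "distW \<Omega> p u v = normW \<Omega> p (\<lambda>x. u x - v x)"

definition Mfd :: "'a::euclidean_space set \<Rightarrow> real \<Rightarrow> ('a \<Rightarrow> real) set" where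
  "Mfd \<Omega> p = {u \<in> W0 \<Omega> p. normW \<Omega> p u powr p = p}"

definition Psi :: "real \<Rightarrow> ('a::euclidean_space \<Rightarrow> real) \<Rightarrow> real" where
  "Psi p u = p / Lp_pow p u"

definition sublevel :: "'a::euclidean_space set \<Rightarrow> real \<Rightarrow> real \<Rightarrow> ('a \<Rightarrow> real) set" where
  "sublevel \<Omega> p a = {u \<in> Mfd \<Omega> p. Psi p u \<le> a}"

definition piM :: "'a::euclidean_space set \<Rightarrow> real \<Rightarrow> ('a \<Rightarrow> real) \<Rightarrow> ('a \<Rightarrow> real)" where
  "piM \<Omega> p u = (\<lambda>x. (p powr (1 / p) / normW \<Omega> p u) * u x)"

definition symmetric_set :: "('b \<Rightarrow> real) set \<Rightarrow> bool" where
  "symmetric_set A \<longleftrightarrow> (\<forall>u\<in>A. - u \<in> A)"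

text \<open>For a symmetric set A (not containing 0) of a (pseudo)metric space with
  distance d and free involution u \<mapsto> -u, the orbit space A/Z_2 is identified
  with a set R of representatives (one of each pair {u,-u}) with the quotient
  metric min(d u v, d u (-v)).  Alexander--Spanier q-cochains with Z_2 coefficients
  are functions of (q+1)-tuples (entries 0..q) to bool; a cochain is locally zero
  if it vanishes on all tuples contained in a member of some open cover (here:
  balls).  The class w \<in> H^1(A/Z_2;Z_2) of the double cover A \<rightarrow> A/Z_2 is
  represented by the cocycle \<phi>(u,v) = [d u v > d u (-v)] on representatives.
  The index is i(A) = sup{m \<ge> 1 : w^(m-1) \<noteq> 0}, with i(\<emptyset>) = 0.\<close>

definition orbit_reps :: "('b \<Rightarrow> real) set \<Rightarrow> ('b \<Rightarrow> real) set" where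
  "orbit_reps A = (SOME R. R \<subseteq> A \<and> (\<forall>u\<in>A. (u \<in> R) \<longleftrightarrow> (- u \<notin> R)))"

definition qdist :: "(('b \<Rightarrow> real) \<Rightarrow> ('b \<Rightarrow> real) \<Rightarrow> real) \<Rightarrow> ('b \<Rightarrow> real) \<Rightarrow> ('b \<Rightarrow> real) \<Rightarrow> real" where
  "qdist d u v = min (d u v) (d u (- v))"

definition locally_zero ::
  "(('b \<Rightarrow> real) \<Rightarrow> ('b \<Rightarrow> real) \<Rightarrow> real) \<Rightarrow> ('b \<Rightarrow> real) set \<Rightarrow> nat \<Rightarrow> ((nat \<Rightarrow> ('b \<Rightarrow> real)) \<Rightarrow> bool) \<Rightarrow> bool" where
  "locally_zero d R q c \<longleftrightarrow>
     (\<exists>r. (\<forall>x\<in>R. r x > 0) \<and>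
        (\<forall>t x. x \<in> R \<and> (\<forall>i\<le>q. t i \<in> R \<and> qdist d (t i) x < r x) \<longrightarrow> \<not> c t))"

definition trunc_tuple :: "nat \<Rightarrow> (nat \<Rightarrow> 'c) \<Rightarrow> nat \<Rightarrow> 'c" where
  "trunc_tuple q t = (\<lambda>i. if i \<le> q then t i else undefined)"

definition del_tuple :: "nat \<Rightarrow> (nat \<Rightarrow> 'c) \<Rightarrow> nat \<Rightarrow> 'c" where
  "del_tuple j t = (\<lambda>i. if i < j then t i else t (Suc i))"

text \<open>Coboundary of a (q-1)-cochain \<psi>, evaluated on q-simplices (q \<ge> 1), mod 2.\<close>
definition cobdry :: "nat \<Rightarrow> ((nat \<Rightarrow> 'c) \<Rightarrow> bool) \<Rightarrow> (nat \<Rightarrow> 'c) \<Rightarrow> bool" where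
  "cobdry q \<psi> t = odd (card {j. j \<le> q \<and> \<psi> (trunc_tuple (q - 1) (del_tuple j t))})"

text \<open>The cocycle \<phi> and its cup powers \<phi>^m (degree m; \<phi>^0 = 1).\<close>
definition w_cocycle :: "(('b \<Rightarrow> real) \<Rightarrow> ('b \<Rightarrow> real) \<Rightarrow> real) \<Rightarrow> ('b \<Rightarrow> real) \<Rightarrow> ('b \<Rightarrow> real) \<Rightarrow> bool" where
  "w_cocycle d u v \<longleftrightarrow> d u v > d u (- v)"

definition w_pow :: "(('b \<Rightarrow> real) \<Rightarrow> ('b \<Rightarrow> real) \<Rightarrow> real) \<Rightarrow> nat \<Rightarrow> (nat \<Rightarrow> ('b \<Rightarrow> real)) \<Rightarrow> bool" where
  "w_pow d m t \<longleftrightarrow> (\<forall>j<m. w_cocycle d (t j) (t (Suc j)))"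

definition w_pow_nonzero :: "(('b \<Rightarrow> real) \<Rightarrow> ('b \<Rightarrow> real) \<Rightarrow> real) \<Rightarrow> ('b \<Rightarrow> real) set \<Rightarrow> nat \<Rightarrow> bool" where
  "w_pow_nonzero d A m \<longleftrightarrow>
     (if m = 0 then \<not> locally_zero d (orbit_reps A) 0 (w_pow d 0)
      else \<not> (\<exists>\<psi>. locally_zero d (orbit_reps A) m (\<lambda>t. w_pow d m t \<noteq> cobdry m \<psi> t)))"

definition fr_index :: "(('b \<Rightarrow> real) \<Rightarrow> ('b \<Rightarrow> real) \<Rightarrow> real) \<Rightarrow> ('b \<Rightarrow> real) set \<Rightarrow> enat" where
  "fr_index d A = Sup {enat (Suc m) | m. w_pow_nonzero d A m}"

definition lam :: "'a::euclidean_space set \<Rightarrow> real \<Rightarrow> nat \<Rightarrow> ereal" where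
  "lam \<Omega> p k = Inf {(SUP u\<in>M. ereal (Psi p u)) | M.
      M \<subseteq> Mfd \<Omega> p \<and> symmetric_set M \<and> fr_index (distW \<Omega> p) M \<ge> enat k}"

definition E0 :: "'a::euclidean_space set \<Rightarrow> real \<Rightarrow> real \<Rightarrow> real \<Rightarrow> ('a \<Rightarrow> real) \<Rightarrow> real" where
  "E0 \<Omega> p \<sigma> lm u =
     (let ps = (real DIM('a) - \<sigma>) * p / (real DIM('a) - p) in
      (LINT x:\<Omega>|lborel. norm (gradW \<Omega> p u x) powr p / p - lm / p * \<bar>u x\<bar> powr p
                         - \<bar>u x\<bar> powr ps / ps * norm x powr (- \<sigma>)))"

end

theory Submission
  imports Defs
begin

definition C1f :: "('a::euclidean_space \<Rightarrow> real) \<Rightarrow> bool" where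
  "C1f f \<longleftrightarrow> (\<forall>x. f differentiable (at x)) \<and>
     (\<forall>v. continuous_on UNIV (\<lambda>x. frechet_derivative f (at x) v))"

lemma fd_eq: "(f has_derivative f') (at x) \<Longrightarrow> frechet_derivative f (at x) = f'"
  using frechet_derivative_at by metis

lemma fdw: "f differentiable (at x) \<Longrightarrow> (f has_derivative frechet_derivative f (at x)) (at x)"
  using frechet_derivative_works by blast

lemma C1f_rpf: "real_polynomial_function f \<Longrightarrow> C1f f"
proof (induction f rule: real_polynomial_function.induct)
  case (linear f)
  have d: "\<And>x. (f has_derivative f) (at x)" using linear bounded_linear_imp_has_derivative by blast
  then show ?case unfolding C1f_def using fd_eq[OF d]
    by (auto simp: differentiable_def)
next
  case (const c)
  have d: "\<And>x. ((\<lambda>x. c) has_derivative (\<lambda>h. 0)) (at x)" by (rule has_derivative_const)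
  then show ?case unfolding C1f_def using fd_eq[OF d]
    by (auto simp: differentiable_def)
next
  case (add f g)
  have d: "\<And>x. ((\<lambda>x. f x + g x) has_derivative (\<lambda>h. frechet_derivative f (at x) h + frechet_derivative g (at x) h)) (at x)"
    using add unfolding C1f_def by (auto intro!: has_derivative_add fdw)
  show ?case unfolding C1f_def fd_eq[OF d]
  proof safe
    show "(\<lambda>x. f x + g x) differentiable at x" for x using d differentiable_def by blast
    show "continuous_on UNIV (\<lambda>x. frechet_derivative f (at x) v + frechet_derivative g (at x) v)" for v
      using add unfolding C1f_def by (auto intro!: continuous_on_add)
  qed
next
  case (mult f g)
  have d: "\<And>x. ((\<lambda>x. f x * g x) has_derivative (\<lambda>h. f x * frechet_derivative g (at x) h + frechet_derivative f (at x) h * g x)) (at x)"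
    using mult unfolding C1f_def by (auto intro!: has_derivative_mult fdw)
  have cf: "continuous_on UNIV f" "continuous_on UNIV g" using mult unfolding C1f_def
    by (auto intro!: continuous_at_imp_continuous_on differentiable_imp_continuous_within)
  show ?case unfolding C1f_def fd_eq[OF d]
  proof safe
    show "(\<lambda>x. f x * g x) differentiable at x" for x using d differentiable_def by blast
    show "continuous_on UNIV (\<lambda>x. f x * frechet_derivative g (at x) v + frechet_derivative f (at x) v * g x)" for v
      using mult cf unfolding C1f_def by (auto intro!: continuous_on_add continuous_on_mult)
  qed
qed

lemma C1f_poly: "polynomial_function (f::'a::euclidean_space \<Rightarrow> real) \<Longrightarrow> C1f f"
  using C1f_rpf real_polynomial_function_eq by blast

lemma C1f_cont: "C1f f \<Longrightarrow> continuous_on UNIV f"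
  unfolding C1f_def by (auto intro!: continuous_at_imp_continuous_on differentiable_imp_continuous_within)

lemma Ck_cmult: "Ck_on UNIV n f \<Longrightarrow> Ck_on UNIV n (\<lambda>x. c * f x)"
proof (induction n arbitrary: f)
  case 0 then show ?case by (auto intro: continuous_on_mult_left)
next
  case (Suc n)
  have d: "\<And>x. ((\<lambda>x. c * f x) has_derivative (\<lambda>h. c * frechet_derivative f (at x) h)) (at x)"
    using Suc.prems by (auto intro!: has_derivative_mult_right fdw)
  have e: "(\<lambda>x. frechet_derivative (\<lambda>x. c * f x) (at x) i) = (\<lambda>x. c * frechet_derivative f (at x) i)" for i
    using fd_eq[OF d] by auto
  show ?case using Suc d by (auto simp only: e intro: continuous_on_mult_left simp: differentiable_def Ck_on.simps)
qed

lemma smooth_cmult: "smooth_fun_on UNIV f \<Longrightarrow> smooth_fun_on UNIV (\<lambda>x. c * f x)"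
  unfolding smooth_fun_on_def using Ck_cmult by blast

lemma IC:
  fixes f :: "'a::euclidean_space \<Rightarrow> real"
  assumes "continuous_on UNIV f" "\<And>x. norm x > R \<Longrightarrow> f x = 0"
  shows "integrable lborel f"
proof -
  have "integrable lborel (\<lambda>x. indicat_real (cball 0 R) x *\<^sub>R f x)"
    by (rule borel_integrable_compact) (auto intro: continuous_on_subset[OF assms(1)])
  moreover have "(\<lambda>x. indicat_real (cball 0 R) x *\<^sub>R f x) = f"
    using assms(2) by (auto simp: indicator_def fun_eq_iff dist_norm)
  ultimately show ?thesis by simp
qed

lemma cont_bound:
  fixes f :: "'a::euclidean_space \<Rightarrow> real"
  assumes "continuous_on UNIV f" "\<And>x. norm x > R \<Longrightarrow> f x = 0"
  obtains B where "B > 0" "\<And>x. \<bar>f x\<bar> \<le> B"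
proof -
  have "compact (f ` cball 0 R)"
    by (rule compact_continuous_image) (auto intro: continuous_on_subset[OF assms(1)])
  then obtain B where B: "B > 0" "\<And>y. y \<in> f ` cball 0 R \<Longrightarrow> norm y \<le> B"
    using compact_imp_bounded bounded_pos by metis
  have "\<bar>f x\<bar> \<le> B" for x
  proof (cases "norm x > R")
    case True then show ?thesis using assms(2) B by auto
  next
    case False then show ?thesis using B(2)[of "f x"] by (auto simp: dist_norm)
  qed
  then show ?thesis using that B by blast
qed

lemma ibp:
  fixes \<phi> P :: "'a::euclidean_space \<Rightarrow> real"
  assumes d\<phi>: "\<And>x. \<phi> differentiable (at x)" and c\<phi>: "continuous_on UNIV \<phi>"
    and cd\<phi>: "continuous_on UNIV (\<lambda>x. frechet_derivative \<phi> (at x) i)"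
    and P: "C1f P" and i: "i \<in> Basis"
    and van: "\<And>x. norm x > R \<Longrightarrow> \<phi> x = 0 \<and> frechet_derivative \<phi> (at x) i = 0"
  shows "integrable lborel (\<lambda>x. frechet_derivative \<phi> (at x) i * P x)"
    and "integrable lborel (\<lambda>x. \<phi> x * frechet_derivative P (at x) i)"
    and "(\<integral>x. frechet_derivative \<phi> (at x) i * P x \<partial>lborel) =
         - (\<integral>x. \<phi> x * frechet_derivative P (at x) i \<partial>lborel)"
proof -
  have cP: "continuous_on UNIV P" using C1f_cont[OF P] .
  have cdP: "continuous_on UNIV (\<lambda>x. frechet_derivative P (at x) i)" using P unfolding C1f_def by auto
  have dP: "\<And>x. P differentiable (at x)" using P unfolding C1f_def by auto
  show I1: "integrable lborel (\<lambda>x. frechet_derivative \<phi> (at x) i * P x)"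
    by (rule IC[where R=R]) (use van in \<open>auto intro!: continuous_on_mult cd\<phi> cP\<close>)
  show I2: "integrable lborel (\<lambda>x. \<phi> x * frechet_derivative P (at x) i)"
    by (rule IC[where R=R]) (use van in \<open>auto intro!: continuous_on_mult c\<phi> cdP\<close>)
  define D where "D x = frechet_derivative \<phi> (at x) i * P x + \<phi> x * frechet_derivative P (at x) i" for x
  define F where "F x = \<phi> x * P x" for x
  have cD: "continuous_on UNIV D" unfolding D_def
    by (auto intro!: continuous_on_add continuous_on_mult c\<phi> cdP cd\<phi> cP)
  have vD: "norm x > R \<Longrightarrow> D x = 0" for x using van unfolding D_def by auto
  have cF: "continuous_on UNIV F" unfolding F_def by (auto intro!: continuous_on_mult c\<phi> cP)
  have vF: "norm x > R \<Longrightarrow> F x = 0" for x using van unfolding F_def by auto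
  obtain B where B: "B > 0" "\<And>x. \<bar>D x\<bar> \<le> B" using cont_bound[OF cD vD] by blast
  have Fd: "(F has_derivative (\<lambda>h. \<phi> y * frechet_derivative P (at y) h + frechet_derivative \<phi> (at y) h * P y)) (at y)" for y
    unfolding F_def using d\<phi> dP by (auto intro!: has_derivative_mult fdw)
  have gd: "((\<lambda>s. F (x + s *\<^sub>R i)) has_real_derivative D (x + s *\<^sub>R i)) (at s)" for x s
  proof -
    let ?y = "x + s *\<^sub>R i"
    have l1: "linear (frechet_derivative P (at ?y))" "linear (frechet_derivative \<phi> (at ?y))"
      using fdw[OF dP] fdw[OF d\<phi>] has_derivative_linear by blast+
    have "((\<lambda>s. x + s *\<^sub>R i) has_derivative (\<lambda>h. h *\<^sub>R i)) (at s)"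
      by (auto intro!: derivative_eq_intros)
    from has_derivative_compose[OF this Fd[of ?y]]
    have "((\<lambda>s. F (x + s *\<^sub>R i)) has_derivative
       (\<lambda>h. \<phi> ?y * frechet_derivative P (at ?y) (h *\<^sub>R i) + frechet_derivative \<phi> (at ?y) (h *\<^sub>R i) * P ?y)) (at s)"
      by (simp add: o_def)
    also have "(\<lambda>h. \<phi> ?y * frechet_derivative P (at ?y) (h *\<^sub>R i) + frechet_derivative \<phi> (at ?y) (h *\<^sub>R i) * P ?y)
       = (*) (D ?y)"
      using l1 by (auto simp: fun_eq_iff D_def linear_scale algebra_simps)
    finally show ?thesis by (simp add: has_field_derivative_def)
  qed
  define s where "s n = inverse (real (Suc n))" for n
  have s_pos: "s n > 0" "s n \<le> 1" for n unfolding s_def by (auto simp: field_simps)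
  have s_lim: "filterlim s (at 0) sequentially"
    unfolding s_def by (rule filterlim_atI) (use LIMSEQ_inverse_real_of_nat in auto)
  define q where "q n x = (F (x + s n *\<^sub>R i) - F x) / s n" for n x
  have ni: "norm i = 1" using i by auto
  have cFt: "continuous_on UNIV (\<lambda>x. F (x + c))" for c
    by (rule continuous_on_compose2[OF cF]) (auto intro!: continuous_intros)
  have IF: "integrable lborel F" by (rule IC[OF cF vF])
  have IFt: "integrable lborel (\<lambda>x. F (x + c))" for c
  proof (rule IC[OF cFt, where R="R + norm c"])
    fix x :: 'a assume "norm x > R + norm c"
    then have "norm (x + c) > R" using norm_triangle_ineq2[of x "-c"] by auto
    then show "F (x + c) = 0" using vF by auto
  qed
  have mF: "F \<in> borel_measurable borel" using cF by (rule borel_measurable_continuous_onI)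
  have transl: "(\<integral>x. F (x + c) \<partial>lborel) = (\<integral>x. F x \<partial>lborel)" for c
  proof -
    have "(\<integral>x. F x \<partial>lborel) = (\<integral>x. F x \<partial>distr lborel borel ((+) c))"
      by (simp add: lborel_distr_plus)
    also have "\<dots> = (\<integral>x. F (c + x) \<partial>lborel)"
      by (rule integral_distr) (use mF in auto)
    finally show ?thesis by (simp add: add.commute)
  qed
  have q0: "(\<integral>x. q n x \<partial>lborel) = 0" for n
    unfolding q_def using IF IFt[of "s n *\<^sub>R i"] transl[of "s n *\<^sub>R i"] by simp
  have "(\<lambda>n. \<integral>x. q n x \<partial>lborel) \<longlonglongrightarrow> (\<integral>x. D x \<partial>lborel)"
  proof (rule integral_dominated_convergence[where w="\<lambda>x. B * indicator (cball 0 (R+1)) x"])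
    show "D \<in> borel_measurable lborel" using cD borel_measurable_continuous_onI by simp
    show "q n \<in> borel_measurable lborel" for n unfolding q_def
      using cFt[of "s n *\<^sub>R i"] cF by (intro borel_measurable_divide borel_measurable_diff; auto intro: borel_measurable_continuous_onI)
    have "integrable lborel (\<lambda>x. indicat_real (cball 0 (R+1)) x *\<^sub>R B)"
      by (rule borel_integrable_compact) auto
    then show "integrable lborel (\<lambda>x. B * indicat_real (cball 0 (R+1)) x)" by (simp add: mult.commute)
    show "AE x in lborel. (\<lambda>n. q n x) \<longlonglongrightarrow> D x"
    proof (intro AE_I2)
      fix x
      have "((\<lambda>h. (F (x + (0 + h) *\<^sub>R i) - F (x + 0 *\<^sub>R i)) / h) \<longlongrightarrow> D (x + 0 *\<^sub>R i)) (at 0)"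
        using gd[of x 0] unfolding DERIV_def by simp
      then have "((\<lambda>h. (F (x + h *\<^sub>R i) - F x) / h) \<longlongrightarrow> D x) (at 0)" by simp
      from filterlim_compose[OF this s_lim] show "(\<lambda>n. q n x) \<longlonglongrightarrow> D x" unfolding q_def by simp
    qed
    show "AE x in lborel. norm (q n x) \<le> B * indicat_real (cball 0 (R+1)) x" for n
    proof (intro AE_I2)
      fix x :: 'a
      show "norm (q n x) \<le> B * indicat_real (cball 0 (R+1)) x"
      proof (cases "norm x > R + 1")
        case True
        then have "norm (x + s n *\<^sub>R i) > R"
          using norm_triangle_ineq2[of x "- s n *\<^sub>R i"] s_pos[of n] ni by auto
        then show ?thesis using True vF[of x] vF[of "x + s n *\<^sub>R i"] unfolding q_def by (auto simp: dist_norm)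
      next
        case False
        obtain z where "z > 0" "z < s n" "F (x + s n *\<^sub>R i) - F (x + 0 *\<^sub>R i) = (s n - 0) * D (x + z *\<^sub>R i)"
          using MVT2[of 0 "s n" "\<lambda>s. F (x + s *\<^sub>R i)" "\<lambda>s. D (x + s *\<^sub>R i)"] gd s_pos[of n] by auto
        then have "q n x = D (x + z *\<^sub>R i)" unfolding q_def using s_pos[of n] by simp
        then show ?thesis using B(2)[of "x + z *\<^sub>R i"] False by (auto simp: dist_norm)
      qed
    qed
  qed
  then have "(\<integral>x. D x \<partial>lborel) = 0" using q0 LIMSEQ_unique[OF _ tendsto_const] by simp
  moreover have "(\<integral>x. D x \<partial>lborel) = (\<integral>x. frechet_derivative \<phi> (at x) i * P x \<partial>lborel) + (\<integral>x. \<phi> x * frechet_derivative P (at x) i \<partial>lborel)"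
    unfolding D_def using I1 I2 by simp
  ultimately show "(\<integral>x. frechet_derivative \<phi> (at x) i * P x \<partial>lborel) =
         - (\<integral>x. \<phi> x * frechet_derivative P (at x) i \<partial>lborel)" by simp
qed

lemma pw_bound:
  fixes a \<delta> p :: real
  assumes "0 < \<delta>" "1 \<le> p"
  shows "\<bar>a\<bar> \<le> \<delta> + \<delta> powr (1 - p) * \<bar>a\<bar> powr p"
proof (cases "\<bar>a\<bar> \<le> \<delta>")
  case True then show ?thesis by (simp add: add_increasing2)
next
  case False
  then have pos: "\<bar>a\<bar> > 0" using assms by auto
  have "\<bar>a\<bar> powr (1 - p) \<le> \<delta> powr (1 - p)"
    using False assms by (intro powr_mono2') auto
  then have "\<bar>a\<bar> powr p * \<bar>a\<bar> powr (1 - p) \<le> \<bar>a\<bar> powr p * \<delta> powr (1 - p)"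
    by (intro mult_left_mono) auto
  moreover have "\<bar>a\<bar> powr p * \<bar>a\<bar> powr (1 - p) = \<bar>a\<bar>"
    using pos by (simp add: powr_add[symmetric])
  ultimately show ?thesis using assms by (simp add: mult.commute add_increasing)
qed

lemma LL:
  fixes f :: "nat \<Rightarrow> 'a::euclidean_space \<Rightarrow> real" and F w :: "'a \<Rightarrow> real"
  assumes p: "1 \<le> p"
    and mf: "\<And>n. f n \<in> borel_measurable lborel" and mF: "F \<in> borel_measurable lborel"
    and mw: "w \<in> borel_measurable lborel"
    and lim: "(\<lambda>n. \<integral>\<^sup>+x. ennreal (\<bar>f n x - F x\<bar> powr p) \<partial>lborel) \<longlonglongrightarrow> 0"
    and wb: "\<And>x. \<bar>w x\<bar> \<le> W" and wK: "\<And>x. x \<notin> K \<Longrightarrow> w x = 0"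
    and K: "K \<in> sets lborel" "emeasure lborel K < \<infinity>"
    and intf: "\<And>n. integrable lborel (\<lambda>x. f n x * w x)"
  shows "integrable lborel (\<lambda>x. F x * w x)"
    and "(\<lambda>n. \<integral>x. f n x * w x \<partial>lborel) \<longlonglongrightarrow> (\<integral>x. F x * w x \<partial>lborel)"
proof -
  define I where "I n = (\<integral>\<^sup>+x. ennreal (\<bar>f n x - F x\<bar> powr p) \<partial>lborel)" for n
  have W0: "W \<ge> 0" using wb[of 0] by auto
  have "eventually (\<lambda>n. I n < 1) sequentially"
    using lim unfolding I_def by (rule order_tendstoD) simp
  then obtain N0 where N0: "\<And>n. n \<ge> N0 \<Longrightarrow> I n < 1" by (auto simp: eventually_sequentially)
  have mD: "(\<lambda>x. \<bar>f n x - F x\<bar> powr p) \<in> borel_measurable lborel" for n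
    using mf mF by measurable
  have intD: "integrable lborel (\<lambda>x. \<bar>f n x - F x\<bar> powr p)" if "n \<ge> N0" for n
  proof (rule integrableI_bounded[OF mD])
    have "I n < \<infinity>" using N0[OF that] using ennreal_less_top order.strict_trans by fastforce
    then show "(\<integral>\<^sup>+x. ennreal (norm (\<bar>f n x - F x\<bar> powr p)) \<partial>lborel) < \<infinity>" unfolding I_def by simp
  qed
  define J where "J n = enn2real (I n)" for n
  have J: "J \<longlonglongrightarrow> 0" unfolding J_def I_def
    by (rule tendsto_enn2real) (use lim in auto)
  have intJ: "(\<integral>x. \<bar>f n x - F x\<bar> powr p \<partial>lborel) = J n" for n
    unfolding J_def I_def by (rule integral_eq_nn_integral[OF mD]) auto
  define m where "m = measure lborel K"
  have intK: "integrable lborel (indicat_real K)" using K by (rule integrable_real_indicator)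
  have mG: "(\<lambda>x. (f n x - F x) * w x) \<in> borel_measurable lborel" for n using mf mF mw by measurable
  have pwb: "\<bar>(f n x - F x) * w x\<bar> \<le> W * \<delta> * indicator K x + W * \<delta> powr (1 - p) * \<bar>f n x - F x\<bar> powr p"
    if "\<delta> > 0" for n x \<delta>
  proof (cases "x \<in> K")
    case True
    have "\<bar>(f n x - F x) * w x\<bar> \<le> \<bar>f n x - F x\<bar> * W" using wb[of x] by (simp add: abs_mult mult_left_mono)
    also have "\<dots> \<le> (\<delta> + \<delta> powr (1 - p) * \<bar>f n x - F x\<bar> powr p) * W"
      using pw_bound[OF that p] W0 by (intro mult_right_mono) auto
    finally show ?thesis using True by (simp add: algebra_simps)
  next
    case False then show ?thesis using wK[of x] W0 by simp
  qed
  have intG: "integrable lborel (\<lambda>x. (f n x - F x) * w x)" if "n \<ge> N0" for n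
    by (rule Bochner_Integration.integrable_bound[where f="\<lambda>x. W * 1 * indicator K x + W * 1 powr (1 - p) * \<bar>f n x - F x\<bar> powr p"])
      (use intK intD[OF that] mG pwb[of 1] in \<open>auto intro!: AE_I2 intro: order_trans[OF _ abs_ge_self]\<close>)
  have intFw: "integrable lborel (\<lambda>x. F x * w x)"
  proof -
    have "integrable lborel (\<lambda>x. f N0 x * w x - (f N0 x - F x) * w x)"
      using intf intG by auto
    then show ?thesis by (simp add: algebra_simps)
  qed
  then show "integrable lborel (\<lambda>x. F x * w x)" .
  have est: "\<bar>(\<integral>x. f n x * w x \<partial>lborel) - (\<integral>x. F x * w x \<partial>lborel)\<bar> \<le> W * \<delta> * m + W * \<delta> powr (1 - p) * J n"
    if "n \<ge> N0" "\<delta> > 0" for n \<delta>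
  proof -
    have "(\<integral>x. f n x * w x \<partial>lborel) - (\<integral>x. F x * w x \<partial>lborel) = (\<integral>x. (f n x - F x) * w x \<partial>lborel)"
      using intf intFw by (simp add: algebra_simps)
    also have "\<bar>\<dots>\<bar> \<le> (\<integral>x. \<bar>(f n x - F x) * w x\<bar> \<partial>lborel)" by (rule integral_abs_bound)
    also have "\<dots> \<le> (\<integral>x. W * \<delta> * indicator K x + W * \<delta> powr (1 - p) * \<bar>f n x - F x\<bar> powr p \<partial>lborel)"
      by (rule integral_mono) (use intG[OF that(1)] intK intD[OF that(1)] pwb[OF that(2)] in auto)
    also have "\<dots> = W * \<delta> * m + W * \<delta> powr (1 - p) * J n"
      using intK intD[OF that(1)] intJ[of n] K unfolding m_def by simp
    finally show ?thesis .
  qed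
  show "(\<lambda>n. \<integral>x. f n x * w x \<partial>lborel) \<longlonglongrightarrow> (\<integral>x. F x * w x \<partial>lborel)"
  proof (rule LIMSEQ_I)
    fix r :: real assume r: "r > 0"
    define \<delta> where "\<delta> = r / (2 * (W * m + 1))"
    have m0: "m \<ge> 0" unfolding m_def by simp
    have \<delta>: "\<delta> > 0" unfolding \<delta>_def using r W0 m0 by (auto intro!: divide_pos_pos add_nonneg_pos)
    have "W * \<delta> * m < r / 2"
    proof -
      have "W * \<delta> * m = r / 2 * (W * m / (W * m + 1))" unfolding \<delta>_def by (simp add: field_simps)
      also have "\<dots> < r / 2 * 1"
      proof (intro mult_strict_left_mono)
        have wm: "W * m \<ge> 0" using W0 m0 by simp
        then show "W * m / (W * m + 1) < 1" by (subst divide_less_eq_1_pos) linarith+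
      qed (use r in auto)
      finally show ?thesis by simp
    qed
    moreover have "eventually (\<lambda>n. W * \<delta> powr (1 - p) * J n < r / 2) sequentially"
      using order_tendstoD(2)[OF tendsto_mult_right_zero[OF J, of "W * \<delta> powr (1 - p)"], of "r/2"] r by simp
    then obtain N1 where "\<And>n. n \<ge> N1 \<Longrightarrow> W * \<delta> powr (1 - p) * J n < r / 2"
      by (auto simp: eventually_sequentially)
    ultimately have "\<forall>n\<ge>max N0 N1. norm ((\<integral>x. f n x * w x \<partial>lborel) - (\<integral>x. F x * w x \<partial>lborel)) < r"
      using est[OF _ \<delta>] by (auto simp: real_norm_def) (smt (verit) max.bounded_iff)
    then show "\<exists>N. \<forall>n\<ge>N. norm ((\<integral>x. f n x * w x \<partial>lborel) - (\<integral>x. F x * w x \<partial>lborel)) < r" by blast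
  qed
qed

lemma test_facts:
  assumes "test_fun \<Omega> \<phi>"
  shows "\<And>x. \<phi> differentiable (at x)" "continuous_on UNIV \<phi>"
    "\<And>i. i \<in> Basis \<Longrightarrow> continuous_on UNIV (\<lambda>x. frechet_derivative \<phi> (at x) i)"
    "\<And>x. x \<notin> \<Omega> \<Longrightarrow> \<phi> x = 0"
    "\<And>x. x \<notin> \<Omega> \<Longrightarrow> frechet_derivative \<phi> (at x) = (\<lambda>h. 0)"
proof -
  have sm: "smooth_fun_on UNIV \<phi>" and sub: "closure {x. \<phi> x \<noteq> 0} \<subseteq> \<Omega>"
    using assms unfolding test_fun_def by auto
  have c1: "Ck_on UNIV (Suc 0) \<phi>" using sm unfolding smooth_fun_on_def by (rule spec)
  then show "\<And>x. \<phi> differentiable (at x)" "continuous_on UNIV \<phi>"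
    "\<And>i. i \<in> Basis \<Longrightarrow> continuous_on UNIV (\<lambda>x. frechet_derivative \<phi> (at x) i)"
    by auto
  show z: "\<phi> x = 0" if "x \<notin> \<Omega>" for x using that sub closure_subset[of "{x. \<phi> x \<noteq> 0}"] by auto
  show "frechet_derivative \<phi> (at x) = (\<lambda>h. 0)" if "x \<notin> \<Omega>" for x
  proof -
    have "((\<lambda>x. 0) has_derivative (\<lambda>h. 0)) (at x)" by simp
    then have "(\<phi> has_derivative (\<lambda>h. 0)) (at x)"
    proof (rule has_derivative_transform_within_open[where s="- closure {x. \<phi> x \<noteq> 0}"])
      show "open (- closure {x. \<phi> x \<noteq> 0})" by auto
      show "x \<in> - closure {x. \<phi> x \<noteq> 0}" using that sub by auto
      show "\<And>y. y \<in> - closure {x. \<phi> x \<noteq> 0} \<Longrightarrow> 0 = \<phi> y" using closure_subset[of "{x. \<phi> x \<noteq> 0}"] by auto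
    qed
    then show ?thesis by (rule fd_eq)
  qed
qed

lemma grad_inner: "i \<in> Basis \<Longrightarrow> grad f x \<bullet> i = frechet_derivative f (at x) i"
  unfolding grad_def by (simp add: inner_sum_left inner_Basis if_distrib sum.delta cong: if_cong)

lemma grad_diff_inner: "i \<in> Basis \<Longrightarrow> (grad f x - y) \<bullet> i = frechet_derivative f (at x) i - y \<bullet> i"
  by (simp add: inner_diff_left grad_inner)

lemma bound_K:
  fixes f :: "'a::euclidean_space \<Rightarrow> real"
  assumes "continuous_on UNIV f"
  obtains W where "\<And>x. \<bar>f x * indicator (cball 0 R) x\<bar> \<le> W"
proof -
  have "compact (f ` cball 0 R)"
    by (rule compact_continuous_image) (auto intro: continuous_on_subset[OF assms(1)])
  from compact_imp_bounded[OF this] obtain B where B: "B > 0" "\<And>y. y \<in> f ` cball 0 R \<Longrightarrow> norm y \<le> B"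
    unfolding bounded_pos by blast
  have "\<bar>f x * indicator (cball 0 R) x\<bar> \<le> B" for x
  proof (cases "x \<in> cball 0 R")
    case True
    then have "norm (f x) \<le> B" by (intro B(2)) auto
    then show ?thesis using True by simp
  next
    case False then show ?thesis using B(1) by simp
  qed
  then show ?thesis by (rule that)
qed

lemma weak_id:
  fixes \<Omega> :: "'a::euclidean_space set"
  assumes W: "W0_grad \<Omega> p u g" and p: "1 \<le> p" and OR: "\<Omega> \<subseteq> cball 0 R"
    and P: "C1f P" and i: "i \<in> Basis"
  shows "integrable lborel (\<lambda>x. (g x \<bullet> i) * (P x * indicator (cball 0 R) x))"
    and "integrable lborel (\<lambda>x. u x * (frechet_derivative P (at x) i * indicator (cball 0 R) x))"
    and "(\<integral>x. (g x \<bullet> i) * (P x * indicator (cball 0 R) x) \<partial>lborel) =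
         - (\<integral>x. u x * (frechet_derivative P (at x) i * indicator (cball 0 R) x) \<partial>lborel)"
proof -
  let ?K = "cball (0::'a) R"
  obtain \<phi> where tf: "\<And>n. test_fun \<Omega> (\<phi> n)"
    and l1: "(\<lambda>n. \<integral>\<^sup>+x. ennreal (\<bar>\<phi> n x - u x\<bar> powr p) \<partial>lborel) \<longlonglongrightarrow> 0"
    and l2: "(\<lambda>n. \<integral>\<^sup>+x. ennreal (norm (grad (\<phi> n) x - g x) powr p) \<partial>lborel) \<longlonglongrightarrow> 0"
    and mu: "u \<in> borel_measurable lborel" and mg: "g \<in> borel_measurable lborel"
    using W unfolding W0_grad_def by blast
  note tfs = test_facts[OF tf]
  have cP: "continuous_on UNIV P" using C1f_cont[OF P] .
  have cdP: "continuous_on UNIV (\<lambda>x. frechet_derivative P (at x) i)" using P unfolding C1f_def by auto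
  obtain W1 where W1: "\<And>x. \<bar>P x * indicator ?K x\<bar> \<le> W1" using bound_K[OF cP] by blast
  obtain W2 where W2: "\<And>x. \<bar>frechet_derivative P (at x) i * indicator ?K x\<bar> \<le> W2" using bound_K[OF cdP] by blast
  have van: "norm x > R \<Longrightarrow> \<phi> n x = 0 \<and> frechet_derivative (\<phi> n) (at x) i = 0" for n x
  proof -
    assume "norm x > R" then have "x \<notin> \<Omega>" using OR by auto
    then show ?thesis using tfs(4,5)[of x n] by auto
  qed
  note ib = ibp[OF tfs(1) tfs(2) tfs(3)[OF i] P i van]
  have e1: "(\<lambda>x. frechet_derivative (\<phi> n) (at x) i * (P x * indicator ?K x)) = (\<lambda>x. frechet_derivative (\<phi> n) (at x) i * P x)" for n
    using van[of _ n] by (auto simp: fun_eq_iff indicator_def dist_norm)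
  have e2: "(\<lambda>x. \<phi> n x * (frechet_derivative P (at x) i * indicator ?K x)) = (\<lambda>x. \<phi> n x * frechet_derivative P (at x) i)" for n
    using van[of _ n] by (auto simp: fun_eq_iff indicator_def dist_norm)
  have mK: "?K \<in> sets lborel" by simp
  have fK: "emeasure lborel ?K < \<infinity>" by (rule emeasure_compact_finite) simp
  have md: "(\<lambda>x. frechet_derivative (\<phi> n) (at x) i) \<in> borel_measurable lborel" for n
    using borel_measurable_continuous_onI[OF tfs(3)[OF i]] by simp
  have mphi: "\<phi> n \<in> borel_measurable lborel" for n
    using borel_measurable_continuous_onI[OF tfs(2)] by simp
  have mP: "P \<in> borel_measurable lborel" using borel_measurable_continuous_onI[OF cP] by simp
  have mdP: "(\<lambda>x. frechet_derivative P (at x) i) \<in> borel_measurable lborel"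
    using borel_measurable_continuous_onI[OF cdP] by simp
  have lim1: "(\<lambda>n. \<integral>\<^sup>+x. ennreal (\<bar>frechet_derivative (\<phi> n) (at x) i - g x \<bullet> i\<bar> powr p) \<partial>lborel) \<longlonglongrightarrow> 0"
  proof (rule tendsto_sandwich[OF _ _ tendsto_const l2])
    show "\<forall>\<^sub>F n in sequentially. 0 \<le> \<integral>\<^sup>+x. ennreal (\<bar>frechet_derivative (\<phi> n) (at x) i - g x \<bullet> i\<bar> powr p) \<partial>lborel"
      by (intro always_eventually allI zero_le)
    have pwle: "\<bar>frechet_derivative (\<phi> n) (at x) i - g x \<bullet> i\<bar> powr p \<le> norm (grad (\<phi> n) x - g x) powr p" for n x
    proof -
      have "\<bar>frechet_derivative (\<phi> n) (at x) i - g x \<bullet> i\<bar> = \<bar>(grad (\<phi> n) x - g x) \<bullet> i\<bar>"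
        by (simp only: grad_diff_inner[OF i])
      also have "\<dots> \<le> norm (grad (\<phi> n) x - g x)" by (rule Basis_le_norm[OF i])
      finally have "\<bar>frechet_derivative (\<phi> n) (at x) i - g x \<bullet> i\<bar> \<le> norm (grad (\<phi> n) x - g x)" .
      then show ?thesis by (rule powr_mono2[rotated 2]) (use p in auto)
    qed
    show "\<forall>\<^sub>F n in sequentially. (\<integral>\<^sup>+x. ennreal (\<bar>frechet_derivative (\<phi> n) (at x) i - g x \<bullet> i\<bar> powr p) \<partial>lborel)
       \<le> (\<integral>\<^sup>+x. ennreal (norm (grad (\<phi> n) x - g x) powr p) \<partial>lborel)"
      by (intro always_eventually allI nn_integral_mono ennreal_leI pwle)
  qed
  have LL1: "integrable lborel (\<lambda>x. (g x \<bullet> i) * (P x * indicator ?K x))"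
     "(\<lambda>n. \<integral>x. frechet_derivative (\<phi> n) (at x) i * (P x * indicator ?K x) \<partial>lborel) \<longlonglongrightarrow>
        (\<integral>x. (g x \<bullet> i) * (P x * indicator ?K x) \<partial>lborel)"
  proof -
    have mgi: "(\<lambda>x. g x \<bullet> i) \<in> borel_measurable lborel" using mg by measurable
    have mw: "(\<lambda>x. P x * indicator ?K x) \<in> borel_measurable lborel" using mP borel_measurable_indicator[OF mK] by (intro borel_measurable_times) auto
    have wK: "x \<notin> ?K \<Longrightarrow> P x * indicator ?K x = 0" for x by simp
    have intf: "integrable lborel (\<lambda>x. frechet_derivative (\<phi> n) (at x) i * (P x * indicator ?K x))" for n
      unfolding e1 by (rule ib(1))
    note L = LL[OF p md mgi mw lim1 W1 wK mK fK intf]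
    show "integrable lborel (\<lambda>x. (g x \<bullet> i) * (P x * indicator ?K x))" by (rule L(1))
    show "(\<lambda>n. \<integral>x. frechet_derivative (\<phi> n) (at x) i * (P x * indicator ?K x) \<partial>lborel) \<longlonglongrightarrow>
        (\<integral>x. (g x \<bullet> i) * (P x * indicator ?K x) \<partial>lborel)" by (rule L(2))
  qed
  have LL2: "integrable lborel (\<lambda>x. u x * (frechet_derivative P (at x) i * indicator ?K x))"
     "(\<lambda>n. \<integral>x. \<phi> n x * (frechet_derivative P (at x) i * indicator ?K x) \<partial>lborel) \<longlonglongrightarrow>
        (\<integral>x. u x * (frechet_derivative P (at x) i * indicator ?K x) \<partial>lborel)"
  proof -
    have mw: "(\<lambda>x. frechet_derivative P (at x) i * indicator ?K x) \<in> borel_measurable lborel" using mdP borel_measurable_indicator[OF mK] by (intro borel_measurable_times) auto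
    have wK: "x \<notin> ?K \<Longrightarrow> frechet_derivative P (at x) i * indicator ?K x = 0" for x by simp
    have intf: "integrable lborel (\<lambda>x. \<phi> n x * (frechet_derivative P (at x) i * indicator ?K x))" for n
      unfolding e2 by (rule ib(2))
    note L = LL[OF p mphi mu mw l1 W2 wK mK fK intf]
    show "integrable lborel (\<lambda>x. u x * (frechet_derivative P (at x) i * indicator ?K x))" by (rule L(1))
    show "(\<lambda>n. \<integral>x. \<phi> n x * (frechet_derivative P (at x) i * indicator ?K x) \<partial>lborel) \<longlonglongrightarrow>
        (\<integral>x. u x * (frechet_derivative P (at x) i * indicator ?K x) \<partial>lborel)" by (rule L(2))
  qed
  show "integrable lborel (\<lambda>x. (g x \<bullet> i) * (P x * indicator ?K x))" by (rule LL1(1))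
  show "integrable lborel (\<lambda>x. u x * (frechet_derivative P (at x) i * indicator ?K x))" by (rule LL2(1))
  have "(\<lambda>n. \<integral>x. frechet_derivative (\<phi> n) (at x) i * (P x * indicator ?K x) \<partial>lborel) \<longlonglongrightarrow>
        - (\<integral>x. u x * (frechet_derivative P (at x) i * indicator ?K x) \<partial>lborel)"
  proof -
    have ib3: "(\<lambda>n. \<integral>x. frechet_derivative (\<phi> n) (at x) i * (P x * indicator ?K x) \<partial>lborel) =
       (\<lambda>n. - \<integral>x. \<phi> n x * (frechet_derivative P (at x) i * indicator ?K x) \<partial>lborel)"
    proof
      fix n show "(\<integral>x. frechet_derivative (\<phi> n) (at x) i * (P x * indicator ?K x) \<partial>lborel) =
       - (\<integral>x. \<phi> n x * (frechet_derivative P (at x) i * indicator ?K x) \<partial>lborel)"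
        unfolding e1 e2 by (rule ib(3))
    qed
    show ?thesis unfolding ib3 by (rule tendsto_minus[OF LL2(2)])
  qed
  then show "(\<integral>x. (g x \<bullet> i) * (P x * indicator ?K x) \<partial>lborel) =
         - (\<integral>x. u x * (frechet_derivative P (at x) i * indicator ?K x) \<partial>lborel)"
    by (rule LIMSEQ_unique[OF LL1(2)])
qed

lemma fund_lemma:
  fixes H :: "'a::euclidean_space \<Rightarrow> real"
  assumes intH: "integrable lborel H" and HK: "\<And>x. x \<notin> cball 0 R \<Longrightarrow> H x = 0"
    and orth: "\<And>P. polynomial_function P \<Longrightarrow> (\<integral>x. H x * P x \<partial>lborel) = 0"
  shows "AE x in lborel. H x = 0"
proof -
  let ?K = "cball (0::'a) R"
  have mH: "H \<in> borel_measurable lborel" using intH by auto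
  have intHf: "integrable lborel (\<lambda>x. H x * f x)" if cf: "continuous_on UNIV f" for f
  proof -
    obtain W where W: "\<And>x. \<bar>f x * indicator ?K x\<bar> \<le> W" using bound_K[OF cf] by blast
    have mf: "f \<in> borel_measurable lborel" using borel_measurable_continuous_onI[OF cf] by simp
    show ?thesis
    proof (rule Bochner_Integration.integrable_bound[where f="\<lambda>x. W * \<bar>H x\<bar>"])
      show "integrable lborel (\<lambda>x. W * \<bar>H x\<bar>)" using intH by auto
      show "(\<lambda>x. H x * f x) \<in> borel_measurable lborel" using mH mf by (rule borel_measurable_times)
      show "AE x in lborel. norm (H x * f x) \<le> norm (W * \<bar>H x\<bar>)"
      proof (rule AE_I2)
        fix x
        show "norm (H x * f x) \<le> norm (W * \<bar>H x\<bar>)"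
        proof (cases "x \<in> ?K")
          case True
          then have "\<bar>f x\<bar> \<le> W" using W[of x] by simp
          then have "\<bar>H x\<bar> * \<bar>f x\<bar> \<le> \<bar>H x\<bar> * W" by (rule mult_left_mono) simp
          moreover have "W \<le> \<bar>W\<bar>" by simp
          then have "\<bar>H x\<bar> * W \<le> \<bar>H x\<bar> * \<bar>W\<bar>" by (rule mult_left_mono) simp
          ultimately show ?thesis by (simp add: abs_mult mult.commute)
        next
          case False then show ?thesis using HK[of x] by simp
        qed
      qed
    qed
  qed
  have E1: "(\<integral>x. H x * f x \<partial>lborel) = 0" if cf: "continuous_on UNIV f" for f
  proof -
    let ?c = "\<integral>x. \<bar>H x\<bar> \<partial>lborel"
    have c0: "?c \<ge> 0" by simp
    have bd: "\<bar>\<integral>x. H x * f x \<partial>lborel\<bar> \<le> e * ?c" if e: "e > 0" for e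
    proof -
      have "continuous_on ?K f" using cf by (rule continuous_on_subset) simp
      from Stone_Weierstrass_polynomial_function[OF _ this e]
      obtain P where P: "polynomial_function P" and Pa: "\<And>x. x \<in> ?K \<Longrightarrow> norm (f x - P x) < e"
        by auto
      have cP: "continuous_on UNIV P" using C1f_cont[OF C1f_poly[OF P]] .
      have "(\<integral>x. H x * f x \<partial>lborel) = (\<integral>x. H x * f x \<partial>lborel) - (\<integral>x. H x * P x \<partial>lborel)"
        using orth[OF P] by simp
      also have "\<dots> = (\<integral>x. H x * (f x - P x) \<partial>lborel)"
        using intHf[OF cf] intHf[OF cP] by (simp add: algebra_simps)
      finally have eq: "(\<integral>x. H x * f x \<partial>lborel) = (\<integral>x. H x * (f x - P x) \<partial>lborel)" .
      have "\<bar>\<integral>x. H x * (f x - P x) \<partial>lborel\<bar> \<le> (\<integral>x. \<bar>H x * (f x - P x)\<bar> \<partial>lborel)"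
        by (rule integral_abs_bound)
      also have "\<dots> \<le> (\<integral>x. e * \<bar>H x\<bar> \<partial>lborel)"
      proof (rule integral_mono)
        have "integrable lborel (\<lambda>x. H x * f x - H x * P x)" using intHf[OF cf] intHf[OF cP] by auto
        then show "integrable lborel (\<lambda>x. \<bar>H x * (f x - P x)\<bar>)" by (simp add: algebra_simps)
        show "integrable lborel (\<lambda>x. e * \<bar>H x\<bar>)" using intH by auto
        fix x
        show "\<bar>H x * (f x - P x)\<bar> \<le> e * \<bar>H x\<bar>"
        proof (cases "x \<in> ?K")
          case True
          then have "\<bar>f x - P x\<bar> \<le> e" using Pa[of x] by simp
          then have "\<bar>H x\<bar> * \<bar>f x - P x\<bar> \<le> \<bar>H x\<bar> * e" by (rule mult_left_mono) simp
          then show ?thesis by (simp add: abs_mult mult.commute)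
        next
          case False then show ?thesis using HK[of x] by simp
        qed
      qed
      also have "\<dots> = e * ?c" by simp
      finally show ?thesis using eq by simp
    qed
    have "\<bar>\<integral>x. H x * f x \<partial>lborel\<bar> \<le> 0"
    proof (rule field_le_epsilon)
      fix e :: real assume e: "e > 0"
      have "e / (?c + 1) > 0" using e c0 by (intro divide_pos_pos) linarith+
      then have "\<bar>\<integral>x. H x * f x \<partial>lborel\<bar> \<le> e / (?c + 1) * ?c" by (rule bd)
      also have "\<dots> = e * (?c / (?c + 1))" by simp
      also have "\<dots> \<le> e * 1"
      proof (rule mult_left_mono)
        show "?c / (?c + 1) \<le> 1" using c0 by (subst divide_le_eq_1_pos) linarith+
      qed (use e in auto)
      finally show "\<bar>\<integral>x. H x * f x \<partial>lborel\<bar> \<le> 0 + e" by simp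
    qed
    then show ?thesis by simp
  qed
  have E2: "(\<integral>x. H x * indicator U x \<partial>lborel) = 0" if U: "open U" for U
  proof (cases "U = UNIV")
    case True
    then show ?thesis using E1[of "\<lambda>x. 1"] by simp
  next
    case False
    define f where "f m x = min 1 (real m * infdist x (- U))" for m :: nat and x :: 'a
    have cf: "continuous_on UNIV (f m)" for m unfolding f_def
      by (intro continuous_intros)
    have f01: "0 \<le> f m x" "f m x \<le> 1" for m x unfolding f_def by (auto simp: infdist_nonneg)
    have lim: "(\<lambda>m. f m x) \<longlonglongrightarrow> indicator U x" for x
    proof (cases "x \<in> U")
      case True
      have "infdist x (- U) > 0" using True False U by (intro infdist_pos_not_in_closed) auto
      from ex_less_of_nat_mult[OF this, of 1] obtain m0 :: nat where "real m0 * infdist x (- U) \<ge> 1"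
        by (auto intro: less_imp_le)
      then have "eventually (\<lambda>m. f m x = 1) sequentially"
        unfolding f_def eventually_sequentially
      proof (intro exI[of _ m0] allI impI)
        fix m assume "m \<ge> m0" and h: "real m0 * infdist x (- U) \<ge> 1"
        then have "real m * infdist x (- U) \<ge> real m0 * infdist x (- U)"
          by (intro mult_right_mono) (auto simp: infdist_nonneg)
        then show "min 1 (real m * infdist x (- U)) = 1" using h by simp
      qed
      then show ?thesis using True by (simp add: tendsto_eventually)
    next
      case False
      then show ?thesis by (simp add: f_def)
    qed
    have "(\<lambda>m. \<integral>x. H x * f m x \<partial>lborel) \<longlonglongrightarrow> (\<integral>x. H x * indicator U x \<partial>lborel)"
    proof (rule integral_dominated_convergence[where w="\<lambda>x. \<bar>H x\<bar>"])
      show "(\<lambda>x. H x * indicator U x) \<in> borel_measurable lborel"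
        using mH U by (intro borel_measurable_times) (auto intro: borel_open)
      show "(\<lambda>x. H x * f m x) \<in> borel_measurable lborel" for m
        using intHf[OF cf[of m]] by auto
      show "integrable lborel (\<lambda>x. \<bar>H x\<bar>)" using intH by auto
      show "AE x in lborel. (\<lambda>m. H x * f m x) \<longlonglongrightarrow> H x * indicator U x"
        using lim by (intro AE_I2 tendsto_mult tendsto_const) auto
      show "AE x in lborel. norm (H x * f m x) \<le> \<bar>H x\<bar>" for m
      proof (rule AE_I2)
        fix x
        have "\<bar>H x\<bar> * \<bar>f m x\<bar> \<le> \<bar>H x\<bar> * 1" using f01[of m x] by (intro mult_left_mono) auto
        then show "norm (H x * f m x) \<le> \<bar>H x\<bar>" by (simp add: abs_mult)
      qed
    qed
    moreover have "(\<integral>x. H x * f m x \<partial>lborel) = 0" for m by (rule E1[OF cf])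
    ultimately show ?thesis using LIMSEQ_unique[OF _ tendsto_const] by simp
  qed
  have E0: "(\<integral>x. H x \<partial>lborel) = 0" using E1[of "\<lambda>x. 1"] by simp
  have E3: "(\<integral>x. indicator A x *\<^sub>R H x \<partial>lborel) = 0" if A: "A \<in> sets borel" for A
  proof -
    have "Int_stable {S::'a set. open S}" by (auto simp: Int_stable_def)
    moreover have "{S::'a set. open S} \<subseteq> Pow UNIV" by simp
    moreover have "A \<in> sigma_sets UNIV {S. open S}" using A by (simp add: sets_borel)
    ultimately show ?thesis
    proof (induction rule: sigma_sets_induct_disjoint)
      case (basic A)
      then show ?case using E2[of A] by (simp add: mult.commute)
    next
      case empty then show ?case by simp
    next
      case (compl A)
      have As: "A \<in> sets lborel" using compl(1) by (simp add: sets_borel)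
      have "(\<lambda>x. indicator (UNIV - A) x *\<^sub>R H x) = (\<lambda>x. H x - indicator A x *\<^sub>R H x)"
        by (auto simp: fun_eq_iff indicator_def)
      then show ?case using compl(2) E0 intH integrable_mult_indicator[OF As intH] by simp
    next
      case (union A)
      have As: "\<And>i. A i \<in> sets lborel" using union(2) by (auto simp: sets_borel)
      have "set_integrable lborel (\<Union>i. A i) H" unfolding set_integrable_def
        using As intH by (intro integrable_mult_indicator) auto
      then have "(LINT x:(\<Union>i. A i)|lborel. H x) = (\<Sum>i. (LINT x:(A i)|lborel. H x))"
        using As union(1) by (intro lebesgue_integral_countable_add) (auto simp: disjoint_family_on_def)
      then show ?case using union(3) by (simp add: set_lebesgue_integral_def)
    qed
  qed
  show ?thesis
  proof (rule sigma_finite_measure.density_zero[OF sigma_finite_lborel intH])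
    fix A :: "'a set" assume "A \<in> sets lborel"
    then show "set_lebesgue_integral lborel A H = 0" unfolding set_lebesgue_integral_def using E3 by simp
  qed
qed

lemma W0_uniq:
  fixes \<Omega> :: "'a::euclidean_space set"
  assumes W1: "W0_grad \<Omega> p u g" and W2: "W0_grad \<Omega> p u' g'"
    and ae: "AE x in lborel. u' x = t * u x"
    and p: "1 \<le> p" and OR: "\<Omega> \<subseteq> cball 0 R"
  shows "AE x in lborel. x \<in> cball 0 R \<longrightarrow> g' x = t *\<^sub>R g x"
proof -
  let ?K = "cball (0::'a) R"
  have c1: "C1f (\<lambda>x::'a. 1)" by (rule C1f_poly) simp
  have Hi: "AE x in lborel. (g' x \<bullet> i - t * (g x \<bullet> i)) * indicator ?K x = 0" if i: "i \<in> Basis" for i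
  proof (rule fund_lemma[where R=R])
    have a: "integrable lborel (\<lambda>x. (g x \<bullet> i) * (1 * indicator ?K x))"
      by (rule weak_id(1)[OF W1 p OR c1 i])
    have b: "integrable lborel (\<lambda>x. (g' x \<bullet> i) * (1 * indicator ?K x))"
      by (rule weak_id(1)[OF W2 p OR c1 i])
    have "integrable lborel (\<lambda>x. (g' x \<bullet> i) * (1 * indicator ?K x) - t * ((g x \<bullet> i) * (1 * indicator ?K x)))"
      using a b by auto
    then show "integrable lborel (\<lambda>x. (g' x \<bullet> i - t * (g x \<bullet> i)) * indicator ?K x)"
      by (simp add: algebra_simps)
    show "\<And>x. x \<notin> ?K \<Longrightarrow> (g' x \<bullet> i - t * (g x \<bullet> i)) * indicator ?K x = 0" by simp
    fix P :: "'a \<Rightarrow> real" assume P: "polynomial_function P"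
    have cP: "C1f P" by (rule C1f_poly[OF P])
    note w1 = weak_id[OF W1 p OR cP i] and w2 = weak_id[OF W2 p OR cP i]
    have eq: "(\<integral>x. u' x * (frechet_derivative P (at x) i * indicator ?K x) \<partial>lborel) =
       (\<integral>x. t * (u x * (frechet_derivative P (at x) i * indicator ?K x)) \<partial>lborel)"
    proof (rule integral_cong_AE)
      show "(\<lambda>x. u' x * (frechet_derivative P (at x) i * indicator ?K x)) \<in> borel_measurable lborel"
        using w2(2) by (rule borel_measurable_integrable)
      have "integrable lborel (\<lambda>x. t * (u x * (frechet_derivative P (at x) i * indicator ?K x)))"
        using w1(2) by simp
      then show "(\<lambda>x. t * (u x * (frechet_derivative P (at x) i * indicator ?K x))) \<in> borel_measurable lborel"
        by (rule borel_measurable_integrable)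
      show "AE x in lborel. u' x * (frechet_derivative P (at x) i * indicator ?K x) =
         t * (u x * (frechet_derivative P (at x) i * indicator ?K x))"
        using ae by eventually_elim simp
    qed
    have "(\<integral>x. (g' x \<bullet> i - t * (g x \<bullet> i)) * indicator ?K x * P x \<partial>lborel) =
      (\<integral>x. (g' x \<bullet> i) * (P x * indicator ?K x) - t * ((g x \<bullet> i) * (P x * indicator ?K x)) \<partial>lborel)"
      by (rule Bochner_Integration.integral_cong) (auto simp: algebra_simps)
    also have "\<dots> = (\<integral>x. (g' x \<bullet> i) * (P x * indicator ?K x) \<partial>lborel) - t * (\<integral>x. (g x \<bullet> i) * (P x * indicator ?K x) \<partial>lborel)"
      using w1(1) w2(1) by simp
    also have "\<dots> = 0" unfolding w1(3) w2(3) eq using w1(2) by simp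
    finally show "(\<integral>x. (g' x \<bullet> i - t * (g x \<bullet> i)) * indicator ?K x * P x \<partial>lborel) = 0" .
  qed
  have "AE x in lborel. \<forall>i\<in>Basis. (g' x \<bullet> i - t * (g x \<bullet> i)) * indicator ?K x = 0"
    by (rule eventually_ball_finite) (use Hi in auto)
  then show ?thesis
  proof (rule AE_mp, intro AE_I2 impI)
    fix x assume h: "\<forall>i\<in>Basis. (g' x \<bullet> i - t * (g x \<bullet> i)) * indicator ?K x = 0" and x: "x \<in> ?K"
    show "g' x = t *\<^sub>R g x"
    proof (rule euclidean_eqI)
      fix i :: 'a assume "i \<in> Basis"
      then show "g' x \<bullet> i = t *\<^sub>R g x \<bullet> i" using h x by auto
    qed
  qed
qed

lemma grad_outside:
  assumes "test_fun \<Omega> \<phi>" "x \<notin> \<Omega>"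
  shows "grad \<phi> x = 0"
  unfolding grad_def using test_facts(5)[OF assms] by simp

lemma W0_outside:
  fixes \<Omega> :: "'a::euclidean_space set"
  assumes W: "W0_grad \<Omega> p u g" and p: "0 < p" and O: "\<Omega> \<in> sets lborel"
  shows "AE x in lborel. x \<notin> \<Omega> \<longrightarrow> g x = 0"
proof -
  obtain \<phi> where tf: "\<And>n. test_fun \<Omega> (\<phi> n)"
    and l2: "(\<lambda>n. \<integral>\<^sup>+x. ennreal (norm (grad (\<phi> n) x - g x) powr p) \<partial>lborel) \<longlonglongrightarrow> 0"
    and mg: "g \<in> borel_measurable lborel"
    using W unfolding W0_grad_def by blast
  let ?I = "\<integral>\<^sup>+x. ennreal (norm (g x) powr p) * indicator (- \<Omega>) x \<partial>lborel"
  have le: "?I \<le> (\<integral>\<^sup>+x. ennreal (norm (grad (\<phi> n) x - g x) powr p) \<partial>lborel)" for n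
  proof (rule nn_integral_mono)
    fix x
    show "ennreal (norm (g x) powr p) * indicator (- \<Omega>) x \<le> ennreal (norm (grad (\<phi> n) x - g x) powr p)"
    proof (cases "x \<in> \<Omega>")
      case False
      then show ?thesis using grad_outside[OF tf False] by simp
    qed simp
  qed
  have "?I \<le> 0"
    by (rule LIMSEQ_le_const[OF l2]) (use le in auto)
  then have "?I = 0" by simp
  moreover have "(\<lambda>x. ennreal (norm (g x) powr p) * indicator (- \<Omega>) x) \<in> borel_measurable lborel"
    using mg O by measurable
  ultimately have "AE x in lborel. ennreal (norm (g x) powr p) * indicator (- \<Omega>) x = 0"
    using nn_integral_0_iff_AE by blast
  then show ?thesis
  proof (rule AE_mp, intro AE_I2 impI)
    fix x assume "ennreal (norm (g x) powr p) * indicator (- \<Omega>) x = 0" "x \<notin> \<Omega>"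
    then have "norm (g x) powr p \<le> 0" by simp
    then show "g x = 0" by (metis norm_eq_zero not_less powr_gt_zero)
  qed
qed

lemma grad_cmult:
  assumes "\<And>x. \<phi> differentiable (at x)"
  shows "grad (\<lambda>x. t * \<phi> x) x = t *\<^sub>R grad \<phi> x"
proof -
  have d: "((\<lambda>x. t * \<phi> x) has_derivative (\<lambda>h. t * frechet_derivative \<phi> (at x) h)) (at x)"
    using assms by (auto intro!: has_derivative_mult_right fdw)
  show ?thesis unfolding grad_def fd_eq[OF d]
    by (simp add: scaleR_sum_right)
qed

lemma W0_cmult:
  fixes \<Omega> :: "'a::euclidean_space set"
  assumes W: "W0_grad \<Omega> p u g" and p: "0 < p"
  shows "W0_grad \<Omega> p (\<lambda>x. t * u x) (\<lambda>x. t *\<^sub>R g x)"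
proof -
  obtain \<phi> where tf: "\<And>n. test_fun \<Omega> (\<phi> n)"
    and l1: "(\<lambda>n. \<integral>\<^sup>+x. ennreal (\<bar>\<phi> n x - u x\<bar> powr p) \<partial>lborel) \<longlonglongrightarrow> 0"
    and l2: "(\<lambda>n. \<integral>\<^sup>+x. ennreal (norm (grad (\<phi> n) x - g x) powr p) \<partial>lborel) \<longlonglongrightarrow> 0"
    and mu: "u \<in> borel_measurable lborel" and mg: "g \<in> borel_measurable lborel"
    and uz: "\<forall>x. x \<notin> \<Omega> \<longrightarrow> u x = 0"
    using W unfolding W0_grad_def by blast
  have tf': "test_fun \<Omega> (\<lambda>x. t * \<phi> n x)" for n
  proof -
    have sm: "smooth_fun_on UNIV (\<phi> n)" and cp: "compact (closure {x. \<phi> n x \<noteq> 0})"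
      and sub: "closure {x. \<phi> n x \<noteq> 0} \<subseteq> \<Omega>"
      using tf[of n] unfolding test_fun_def by auto
    have ss: "{x. t * \<phi> n x \<noteq> 0} \<subseteq> {x. \<phi> n x \<noteq> 0}" by auto
    have "closure {x. t * \<phi> n x \<noteq> 0} \<subseteq> closure {x. \<phi> n x \<noteq> 0}" by (rule closure_mono[OF ss])
    moreover have "bounded {x. t * \<phi> n x \<noteq> 0}"
      using bounded_subset[OF _ ss] cp by (simp add: compact_closure)
    ultimately show ?thesis unfolding test_fun_def using smooth_cmult[OF sm] sub
      by (simp add: compact_closure)
  qed
  have e1: "ennreal (\<bar>t * \<phi> n x - t * u x\<bar> powr p) = ennreal (\<bar>t\<bar> powr p) * ennreal (\<bar>\<phi> n x - u x\<bar> powr p)" for n x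
  proof -
    have "\<bar>t * \<phi> n x - t * u x\<bar> = \<bar>t\<bar> * \<bar>\<phi> n x - u x\<bar>" by (simp add: abs_mult[symmetric] algebra_simps)
    then show ?thesis by (simp add: powr_mult ennreal_mult)
  qed
  have e2: "ennreal (norm (grad (\<lambda>x. t * \<phi> n x) x - t *\<^sub>R g x) powr p) = ennreal (\<bar>t\<bar> powr p) * ennreal (norm (grad (\<phi> n) x - g x) powr p)" for n x
  proof -
    have "grad (\<lambda>x. t * \<phi> n x) x = t *\<^sub>R grad (\<phi> n) x" by (rule grad_cmult[OF test_facts(1)[OF tf]])
    then have "norm (grad (\<lambda>x. t * \<phi> n x) x - t *\<^sub>R g x) = \<bar>t\<bar> * norm (grad (\<phi> n) x - g x)"
      by (simp add: scaleR_diff_right[symmetric])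
    then show ?thesis by (simp add: powr_mult ennreal_mult)
  qed
  have mphi: "\<phi> n \<in> borel_measurable lborel" for n
    using borel_measurable_continuous_onI[OF test_facts(2)[OF tf]] by simp
  have mgr: "(\<lambda>x. grad (\<phi> n) x) \<in> borel_measurable lborel" for n
  proof -
    have "(\<lambda>x. frechet_derivative (\<phi> n) (at x) i) \<in> borel_measurable lborel" if "i \<in> Basis" for i
      using borel_measurable_continuous_onI[OF test_facts(3)[OF tf that]] by simp
    then show ?thesis unfolding grad_def by (intro borel_measurable_sum) auto
  qed
  have L1: "(\<lambda>n. \<integral>\<^sup>+x. ennreal (\<bar>t * \<phi> n x - t * u x\<bar> powr p) \<partial>lborel) \<longlonglongrightarrow> 0"
  proof -
    have "(\<lambda>n. ennreal (\<bar>t\<bar> powr p) * (\<integral>\<^sup>+x. ennreal (\<bar>\<phi> n x - u x\<bar> powr p) \<partial>lborel)) \<longlonglongrightarrow> ennreal (\<bar>t\<bar> powr p) * 0"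
      by (rule ennreal_tendsto_cmult[OF _ l1]) simp
    moreover have "(\<integral>\<^sup>+x. ennreal (\<bar>t * \<phi> n x - t * u x\<bar> powr p) \<partial>lborel) =
      ennreal (\<bar>t\<bar> powr p) * (\<integral>\<^sup>+x. ennreal (\<bar>\<phi> n x - u x\<bar> powr p) \<partial>lborel)" for n
      unfolding e1 by (rule nn_integral_cmult) (use mphi mu in measurable)
    ultimately show ?thesis by simp
  qed
  have L2: "(\<lambda>n. \<integral>\<^sup>+x. ennreal (norm (grad (\<lambda>x. t * \<phi> n x) x - t *\<^sub>R g x) powr p) \<partial>lborel) \<longlonglongrightarrow> 0"
  proof -
    have "(\<lambda>n. ennreal (\<bar>t\<bar> powr p) * (\<integral>\<^sup>+x. ennreal (norm (grad (\<phi> n) x - g x) powr p) \<partial>lborel)) \<longlonglongrightarrow> ennreal (\<bar>t\<bar> powr p) * 0"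
      by (rule ennreal_tendsto_cmult[OF _ l2]) simp
    moreover have "(\<integral>\<^sup>+x. ennreal (norm (grad (\<lambda>x. t * \<phi> n x) x - t *\<^sub>R g x) powr p) \<partial>lborel) =
      ennreal (\<bar>t\<bar> powr p) * (\<integral>\<^sup>+x. ennreal (norm (grad (\<phi> n) x - g x) powr p) \<partial>lborel)" for n
      unfolding e2 by (rule nn_integral_cmult) (use mgr mg in measurable)
    ultimately show ?thesis by simp
  qed
  show ?thesis unfolding W0_grad_def
    using tf' L1 L2 mu mg uz by (intro conjI exI[of _ "\<lambda>n x. t * \<phi> n x"]) auto
qed

lemma two_pow_bound:
  fixes a b p :: real
  assumes "0 \<le> p"
  shows "\<bar>a + b\<bar> powr p \<le> 2 powr p * (\<bar>a\<bar> powr p + \<bar>b\<bar> powr p)"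
proof -
  have "\<bar>a + b\<bar> \<le> 2 * max \<bar>a\<bar> \<bar>b\<bar>" by auto
  then have "\<bar>a + b\<bar> powr p \<le> (2 * max \<bar>a\<bar> \<bar>b\<bar>) powr p" using assms by (intro powr_mono2) auto
  also have "\<dots> = 2 powr p * max \<bar>a\<bar> \<bar>b\<bar> powr p" by (simp add: powr_mult)
  also have "\<dots> \<le> 2 powr p * (\<bar>a\<bar> powr p + \<bar>b\<bar> powr p)"
    by (intro mult_left_mono) (auto simp: max_def)
  finally show ?thesis .
qed

lemma W0_Lp:
  fixes \<Omega> :: "'a::euclidean_space set"
  assumes W: "W0_grad \<Omega> p u g" and p: "0 < p" and OR: "\<Omega> \<subseteq> cball 0 R"
  shows "integrable lborel (\<lambda>x. \<bar>u x\<bar> powr p)"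
proof -
  obtain \<phi> where tf: "\<And>n. test_fun \<Omega> (\<phi> n)"
    and l1: "(\<lambda>n. \<integral>\<^sup>+x. ennreal (\<bar>\<phi> n x - u x\<bar> powr p) \<partial>lborel) \<longlonglongrightarrow> 0"
    and mu: "u \<in> borel_measurable lborel"
    using W unfolding W0_grad_def by blast
  have "eventually (\<lambda>n. (\<integral>\<^sup>+x. ennreal (\<bar>\<phi> n x - u x\<bar> powr p) \<partial>lborel) < 1) sequentially"
    using l1 by (rule order_tendstoD) simp
  then obtain N where N: "(\<integral>\<^sup>+x. ennreal (\<bar>\<phi> N x - u x\<bar> powr p) \<partial>lborel) < 1"
    by (auto simp: eventually_sequentially)
  have mphi: "\<phi> N \<in> borel_measurable lborel"
    using borel_measurable_continuous_onI[OF test_facts(2)[OF tf]] by simp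
  have i1: "integrable lborel (\<lambda>x. \<bar>\<phi> N x - u x\<bar> powr p)"
  proof (rule integrableI_bounded)
    show "(\<lambda>x. \<bar>\<phi> N x - u x\<bar> powr p) \<in> borel_measurable lborel" using mphi mu by measurable
    have "(\<integral>\<^sup>+x. ennreal (\<bar>\<phi> N x - u x\<bar> powr p) \<partial>lborel) < \<infinity>"
      using N ennreal_less_top order.strict_trans by fastforce
    then show "(\<integral>\<^sup>+x. ennreal (norm (\<bar>\<phi> N x - u x\<bar> powr p)) \<partial>lborel) < \<infinity>" by simp
  qed
  have cphi: "continuous_on UNIV (\<phi> N)" using test_facts(2)[OF tf] .
  have vphi: "norm x > R \<Longrightarrow> \<phi> N x = 0" for x
  proof -
    assume "norm x > R" then have "x \<notin> \<Omega>" using OR by auto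
    then show ?thesis using test_facts(4)[OF tf, of x N] by simp
  qed
  obtain B where B: "B > 0" "\<And>x. \<bar>\<phi> N x\<bar> \<le> B" using cont_bound[OF cphi vphi] by blast
  have i2: "integrable lborel (\<lambda>x::'a. B powr p * indicator (cball 0 R) x)"
  proof -
    have "integrable lborel (indicat_real (cball (0::'a) R))"
      by (rule integrable_real_indicator) (simp, rule emeasure_compact_finite, simp)
    then show ?thesis by simp
  qed
  have pw: "\<bar>u x\<bar> powr p \<le> 2 powr p * (\<bar>\<phi> N x - u x\<bar> powr p + B powr p * indicator (cball 0 R) x)" for x
  proof -
    have "\<bar>u x\<bar> powr p = \<bar>(u x - \<phi> N x) + \<phi> N x\<bar> powr p" by simp
    also have "\<dots> \<le> 2 powr p * (\<bar>u x - \<phi> N x\<bar> powr p + \<bar>\<phi> N x\<bar> powr p)"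
      using p by (intro two_pow_bound) auto
    also have "\<bar>\<phi> N x\<bar> powr p \<le> B powr p * indicator (cball 0 R) x"
    proof (cases "norm x > R")
      case True then show ?thesis using vphi by simp
    next
      case False then show ?thesis using B p by (auto intro: powr_mono2)
    qed
    then have "2 powr p * (\<bar>u x - \<phi> N x\<bar> powr p + \<bar>\<phi> N x\<bar> powr p) \<le> 2 powr p * (\<bar>\<phi> N x - u x\<bar> powr p + B powr p * indicator (cball 0 R) x)"
      by (intro mult_left_mono) (auto simp: abs_minus_commute)
    finally show ?thesis .
  qed
  show ?thesis
  proof (rule Bochner_Integration.integrable_bound[OF _ _ AE_I2])
    show "integrable lborel (\<lambda>x. 2 powr p * (\<bar>\<phi> N x - u x\<bar> powr p + B powr p * indicator (cball 0 R) x))"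
      using i1 i2 by auto
    show "(\<lambda>x. \<bar>u x\<bar> powr p) \<in> borel_measurable lborel" using mu by measurable
    fix x show "norm (\<bar>u x\<bar> powr p) \<le> norm (2 powr p * (\<bar>\<phi> N x - u x\<bar> powr p + B powr p * indicator (cball 0 R) x))"
      using pw[of x] by simp
  qed
qed

lemma pw2:
  fixes a \<epsilon> p ps \<sigma> nx R :: real
  assumes "0 < \<epsilon>" "p < ps" "0 < \<sigma>" "0 < nx" "nx \<le> R" "0 \<le> a" "0 \<le> p"
  shows "a powr p \<le> \<epsilon> powr p + \<epsilon> powr (p - ps) * R powr \<sigma> * (a powr ps * nx powr (- \<sigma>))"
proof -
  have R: "R > 0" using assms by linarith
  have r1: "R powr \<sigma> * nx powr (- \<sigma>) \<ge> 1"
  proof -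
    have "nx powr \<sigma> \<le> R powr \<sigma>" using assms by (intro powr_mono2) auto
    moreover have "nx powr \<sigma> > 0" using assms by simp
    ultimately show ?thesis by (simp add: powr_minus divide_simps)
  qed
  have nn: "0 \<le> \<epsilon> powr (p - ps) * R powr \<sigma> * (a powr ps * nx powr (- \<sigma>))" by simp
  show ?thesis
  proof (cases "a \<le> \<epsilon>")
    case True
    then have "a powr p \<le> \<epsilon> powr p" using assms by (intro powr_mono2) auto
    then show ?thesis using nn by linarith
  next
    case False
    then have a: "a > 0" using assms by linarith
    have "a powr p = a powr ps * a powr (p - ps)" using a by (simp add: powr_add[symmetric])
    also have "\<dots> \<le> a powr ps * \<epsilon> powr (p - ps)"
      using False assms by (intro mult_left_mono powr_mono2') auto
    also have "\<dots> = (\<epsilon> powr (p - ps) * a powr ps) * 1" by simp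
    also have "\<dots> \<le> (\<epsilon> powr (p - ps) * a powr ps) * (R powr \<sigma> * nx powr (- \<sigma>))"
      by (intro mult_left_mono r1) simp
    also have "\<dots> = \<epsilon> powr (p - ps) * R powr \<sigma> * (a powr ps * nx powr (- \<sigma>))" by (simp add: algebra_simps)
    finally show ?thesis by (simp add: add_increasing)
  qed
qed

lemma RA:
  fixes \<alpha> \<beta> s p ps :: real
  assumes "0 \<le> \<alpha>" "0 < \<beta>" "0 \<le> s" "0 < p" "p < ps"
  shows "\<alpha> * s powr p - \<beta> * s powr ps \<le> \<alpha> powr (ps / (ps - p)) * \<beta> powr (- p / (ps - p))"
proof -
  define q where "q = ps - p"
  have q: "q > 0" using assms unfolding q_def by simp
  have sps: "s powr ps = s powr p * s powr q" unfolding q_def by (simp add: powr_add[symmetric])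
  have rhs0: "0 \<le> \<alpha> powr (ps / (ps - p)) * \<beta> powr (- p / (ps - p))" by simp
  show ?thesis
  proof (cases "s powr q \<ge> \<alpha> / \<beta>")
    case True
    then have "\<beta> * s powr q \<ge> \<alpha>" using assms by (simp add: divide_simps mult.commute)
    then have "\<alpha> * s powr p - \<beta> * s powr ps = s powr p * (\<alpha> - \<beta> * s powr q) " unfolding sps by (simp add: algebra_simps)
    also have "\<dots> \<le> 0" using \<open>\<beta> * s powr q \<ge> \<alpha>\<close> by (intro mult_nonneg_nonpos) auto
    finally show ?thesis using rhs0 by linarith
  next
    case False
    then have lt: "s powr q < \<alpha> / \<beta>" by simp
    have ab: "\<alpha> / \<beta> \<ge> 0" using assms by simp
    have "s = (s powr q) powr (1 / q)" using q assms by (simp add: powr_powr)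
    also have "\<dots> \<le> (\<alpha> / \<beta>) powr (1 / q)" using lt q by (intro powr_mono2) auto
    finally have s1: "s \<le> (\<alpha> / \<beta>) powr (1 / q)" .
    have "s powr p \<le> ((\<alpha> / \<beta>) powr (1 / q)) powr p" using s1 assms by (intro powr_mono2) auto
    also have "\<dots> = (\<alpha> / \<beta>) powr (p / q)" by (simp add: powr_powr)
    finally have sp: "s powr p \<le> (\<alpha> / \<beta>) powr (p / q)" .
    have "\<alpha> * s powr p - \<beta> * s powr ps \<le> \<alpha> * s powr p" using assms by simp
    also have "\<dots> \<le> \<alpha> * (\<alpha> / \<beta>) powr (p / q)" using sp assms by (intro mult_left_mono) auto
    also have "\<dots> = \<alpha> powr (ps / q) * \<beta> powr (- p / q)"
    proof (cases "\<alpha> = 0")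
      case True then show ?thesis using q assms by simp
    next
      case False
      then have a: "\<alpha> > 0" using assms by simp
      have "\<alpha> * (\<alpha> / \<beta>) powr (p / q) = \<alpha> powr 1 * (\<alpha> powr (p / q) * \<beta> powr (- p / q))"
        using a assms by (simp add: powr_divide powr_minus divide_simps)
      also have "\<dots> = \<alpha> powr (1 + p / q) * \<beta> powr (- p / q)" by (simp add: powr_add)
      also have "1 + p / q = ps / q" using q unfolding q_def by (simp add: field_simps)
      finally show ?thesis .
    qed
    finally show ?thesis unfolding q_def .
  qed
qed

lemma final_bound:
  fixes E L t p ps V V' R \<sigma> a b :: real
  assumes L: "L > 0" and t: "t > 0" and p: "p > 0" and pps: "p < ps"
    and V: "0 \<le> V" "V \<le> V'" "0 < V'" and R: "R > 0" and a: "a \<ge> 0"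
    and ineq: "\<And>\<epsilon>. \<epsilon> > 0 \<Longrightarrow> L \<le> \<epsilon> powr p * V + \<epsilon> powr (p - ps) * R powr \<sigma> * b"
    and E: "E \<le> t powr p * (a * L / p) - t powr ps / ps * b"
  shows "E \<le> (a / p) powr (ps / (ps - p)) *
      ((1/2 * (2 * V') powr (- ((ps - p) / p)) * R powr (- \<sigma>)) / ps) powr (- p / (ps - p))"
proof -
  define \<epsilon> where "\<epsilon> = (L / (2 * V')) powr (1 / p)"
  have LV: "L / (2 * V') > 0" using L V by simp
  have e0: "\<epsilon> > 0" unfolding \<epsilon>_def using LV L V by simp
  have ep: "\<epsilon> powr p = L / (2 * V')" unfolding \<epsilon>_def using LV L V p by (simp add: powr_powr)
  have h1: "\<epsilon> powr p * V \<le> L / 2"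
  proof -
    have "\<epsilon> powr p * V = L / 2 * (V / V')" unfolding ep using V by (simp add: field_simps)
    also have "\<dots> \<le> L / 2 * 1" using V L by (intro mult_left_mono) auto
    finally show ?thesis by simp
  qed
  have h2: "L / 2 \<le> \<epsilon> powr (p - ps) * R powr \<sigma> * b" using ineq[OF e0] h1 by linarith
  define k where "k = \<epsilon> powr (ps - p) * R powr (- \<sigma>)"
  have k0: "k > 0" unfolding k_def using e0 R by simp
  have kk: "k * (\<epsilon> powr (p - ps) * R powr \<sigma>) = 1"
    unfolding k_def using e0 R by (simp add: powr_add[symmetric] algebra_simps)
  have h3: "L / 2 * k \<le> b"
  proof -
    have "L / 2 * k \<le> \<epsilon> powr (p - ps) * R powr \<sigma> * b * k" using h2 k0 by (intro mult_right_mono) auto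
    also have "\<dots> = b" using kk by (simp add: algebra_simps)
    finally show ?thesis .
  qed
  define \<kappa> where "\<kappa> = 1/2 * (2 * V') powr (- ((ps - p) / p)) * R powr (- \<sigma>)"
  have \<kappa>0: "\<kappa> > 0" unfolding \<kappa>_def using V R by simp
  have epq: "\<epsilon> powr (ps - p) = L powr ((ps - p) / p) * (2 * V') powr (- ((ps - p) / p))"
  proof -
    have "\<epsilon> powr (ps - p) = (L / (2 * V')) powr ((ps - p) / p)" unfolding \<epsilon>_def using LV L V p by (simp add: powr_powr)
    also have "\<dots> = L powr ((ps - p) / p) / (2 * V') powr ((ps - p) / p)"
      using L V by (intro powr_divide)
    also have "\<dots> = L powr ((ps - p) / p) * (2 * V') powr (- ((ps - p) / p))"
      by (simp only: powr_minus divide_inverse)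
    finally show ?thesis .
  qed
  have Lk: "L / 2 * k = \<kappa> * L powr (ps / p)"
  proof -
    have "L / 2 * k = 1/2 * (L * L powr ((ps - p) / p)) * (2 * V') powr (- ((ps - p) / p)) * R powr (- \<sigma>)"
      unfolding k_def epq by (simp add: algebra_simps)
    also have "L * L powr ((ps - p) / p) = L powr (ps / p)"
    proof -
      have "L * L powr ((ps - p) / p) = L powr (1 + (ps - p) / p)" using L by (simp add: powr_add)
      also have "1 + (ps - p) / p = ps / p" using p by (simp add: field_simps)
      finally show ?thesis .
    qed
    finally show ?thesis unfolding \<kappa>_def by (simp add: algebra_simps)
  qed
  have bge: "b \<ge> \<kappa> * L powr (ps / p)" using h3 Lk by simp
  define s where "s = t * L powr (1 / p)"
  have s0: "s \<ge> 0" unfolding s_def using t L by simp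
  have sp: "s powr p = t powr p * L" unfolding s_def using t L p by (simp add: powr_mult powr_powr)
  have sps: "s powr ps = t powr ps * L powr (ps / p)" unfolding s_def using t L p by (simp add: powr_mult powr_powr)
  have ps0: "ps > 0" using p pps by simp
  have "E \<le> t powr p * (a * L / p) - t powr ps / ps * b" by (rule E)
  also have "\<dots> \<le> t powr p * (a * L / p) - t powr ps / ps * (\<kappa> * L powr (ps / p))"
    using bge t ps0 by (intro diff_left_mono mult_left_mono) auto
  also have "\<dots> = (a / p) * s powr p - (\<kappa> / ps) * s powr ps" unfolding sp sps by (simp add: algebra_simps)
  also have "\<dots> \<le> (a / p) powr (ps / (ps - p)) * (\<kappa> / ps) powr (- p / (ps - p))"
    by (rule RA) (use a p \<kappa>0 ps0 s0 pps in auto)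
  finally show ?thesis unfolding \<kappa>_def .
qed

lemma energy:
  fixes \<Omega> :: "'a::euclidean_space set" and v :: "'a \<Rightarrow> real"
  assumes Om: "open \<Omega>" and OR: "\<Omega> \<subseteq> cball 0 R"
    and p: "1 < p" and pN: "p < real DIM('a)" and \<sigma>: "0 < \<sigma>" "\<sigma> < p"
    and vM: "v \<in> Mfd \<Omega> p" and Psi: "Psi p v \<le> \<Lambda>" and t: "0 \<le> t"
    and ps_def: "ps = (real DIM('a) - \<sigma>) * p / (real DIM('a) - p)"
  shows "\<exists>L>0. p \<le> \<Lambda> * L \<and> (E0 \<Omega> p \<sigma> lm (\<lambda>x. t * v x) = 0 \<or>
     (\<exists>Cv\<ge>0. E0 \<Omega> p \<sigma> lm (\<lambda>x. t * v x) \<le> t powr p * (1 - lm * L / p) - Cv \<and>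
        (t > 0 \<longrightarrow> (\<exists>b. Cv = t powr ps / ps * b \<and>
            (\<forall>\<epsilon>>0. L \<le> \<epsilon> powr p * measure lborel \<Omega> + \<epsilon> powr (p - ps) * R powr \<sigma> * b)))))"
proof -
  let ?K = "cball (0::'a) R"
  have p1: "1 \<le> p" and p0: "0 < p" using p by auto
  have ps_pos: "ps > 0" unfolding ps_def using pN \<sigma> p by (auto intro!: divide_pos_pos mult_pos_pos)
  have Os: "\<Omega> \<in> sets lborel" using Om by simp
  have vW: "v \<in> W0 \<Omega> p" and nv: "normW \<Omega> p v powr p = p" using vM unfolding Mfd_def by auto
  define gv where "gv = gradW \<Omega> p v"
  obtain g0 where "W0_grad \<Omega> p v g0" using vW unfolding W0_def by auto
  then have Wv: "W0_grad \<Omega> p v gv" unfolding gv_def gradW_def by (rule someI[where P="W0_grad \<Omega> p v"])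
  define gt where "gt = gradW \<Omega> p (\<lambda>x. t * v x)"
  have Wt: "W0_grad \<Omega> p (\<lambda>x. t * v x) gt" unfolding gt_def gradW_def
    by (rule someI[where P="W0_grad \<Omega> p (\<lambda>x. t * v x)"]) (rule W0_cmult[OF Wv p0])
  have mv: "v \<in> borel_measurable lborel" and mgv: "gv \<in> borel_measurable lborel"
    and vz: "\<And>x. x \<notin> \<Omega> \<Longrightarrow> v x = 0"
    using Wv unfolding W0_grad_def by auto
  have mgt: "gt \<in> borel_measurable lborel" using Wt unfolding W0_grad_def by auto
  define I where "I = (\<integral>x. norm (gv x) powr p \<partial>lborel)"
  have I0: "I \<ge> 0" unfolding I_def by simp
  have nW: "normW \<Omega> p v = I powr (1 / p)" unfolding normW_def I_def gv_def ..
  have Ip: "I = p"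
  proof (cases "I = 0")
    case True then show ?thesis using nv nW p by simp
  next
    case False
    then have "normW \<Omega> p v powr p = I" using I0 p unfolding nW by (simp add: powr_powr)
    then show ?thesis using nv by simp
  qed
  have intI: "integrable lborel (\<lambda>x. norm (gv x) powr p)"
    using Ip p not_integrable_integral_eq unfolding I_def by fastforce
  have uniq: "AE x in lborel. x \<in> ?K \<longrightarrow> gt x = t *\<^sub>R gv x"
    by (rule W0_uniq[OF Wv Wt _ p1 OR]) simp
  define L where "L = Lp_pow p v"
  have intL: "integrable lborel (\<lambda>x. \<bar>v x\<bar> powr p)" by (rule W0_Lp[OF Wv p0 OR])
  have L0: "L \<ge> 0" unfolding L_def Lp_pow_def by simp
  have Lpos: "L > 0"
  proof (rule ccontr)
    assume "\<not> L > 0"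
    then have "L = 0" using L0 by simp
    then have "AE x in lborel. \<bar>v x\<bar> powr p = 0"
      using intL unfolding L_def Lp_pow_def by (subst integral_nonneg_eq_0_iff_AE[symmetric]) auto
    then have ae0: "AE x in lborel. v x = 0 * v x" by eventually_elim simp
    have a1: "AE x in lborel. x \<in> ?K \<longrightarrow> gv x = 0 *\<^sub>R gv x" by (rule W0_uniq[OF Wv Wv ae0 p1 OR])
    have a2: "AE x in lborel. x \<notin> \<Omega> \<longrightarrow> gv x = 0" by (rule W0_outside[OF Wv p0 Os])
    have "AE x in lborel. norm (gv x) powr p = 0"
      using a1 a2 by eventually_elim (use OR in auto)
    then have "I = 0" unfolding I_def by (simp add: integral_eq_zero_AE)
    then show False using Ip p by simp
  qed
  have pL: "p \<le> \<Lambda> * L"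
  proof -
    have "Psi p v = p / L" unfolding Psi_def L_def ..
    then have "p / L \<le> \<Lambda>" using Psi by simp
    then show ?thesis using Lpos by (simp add: divide_le_eq)
  qed
  define \<Phi> where "\<Phi> x = norm (gt x) powr p / p - lm / p * \<bar>t * v x\<bar> powr p
      - \<bar>t * v x\<bar> powr ps / ps * norm x powr (- \<sigma>)" for x
  have E0eq: "E0 \<Omega> p \<sigma> lm (\<lambda>x. t * v x) = (\<integral>x. indicator \<Omega> x *\<^sub>R \<Phi> x \<partial>lborel)"
    unfolding E0_def Let_def set_lebesgue_integral_def \<Phi>_def gt_def ps_def by simp
  show ?thesis
  proof (intro exI[of _ L] conjI Lpos pL)
    show "E0 \<Omega> p \<sigma> lm (\<lambda>x. t * v x) = 0 \<or>
     (\<exists>Cv\<ge>0. E0 \<Omega> p \<sigma> lm (\<lambda>x. t * v x) \<le> t powr p * (1 - lm * L / p) - Cv \<and>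
        (t > 0 \<longrightarrow> (\<exists>b. Cv = t powr ps / ps * b \<and>
            (\<forall>\<epsilon>>0. L \<le> \<epsilon> powr p * measure lborel \<Omega> + \<epsilon> powr (p - ps) * R powr \<sigma> * b))))"
    proof (cases "integrable lborel (\<lambda>x. indicator \<Omega> x *\<^sub>R \<Phi> x)")
      case False
      then show ?thesis unfolding E0eq by (simp add: not_integrable_integral_eq)
    next
      case True
      define A where "A x = indicator \<Omega> x * (norm (gt x) powr p / p)" for x
      define A' where "A' x = indicator \<Omega> x * (t powr p / p * norm (gv x) powr p)" for x
      define B where "B x = lm / p * t powr p * \<bar>v x\<bar> powr p" for x
      define c where "c x = indicator \<Omega> x * (\<bar>v x\<bar> powr ps * norm x powr (- \<sigma>))" for x
      define C where "C x = t powr ps / ps * c x" for x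
      have split: "indicator \<Omega> x *\<^sub>R \<Phi> x = A x - B x - C x" for x
      proof (cases "x \<in> \<Omega>")
        case True then show ?thesis
          unfolding A_def B_def C_def c_def \<Phi>_def using t by (simp add: abs_mult powr_mult algebra_simps)
      next
        case False then show ?thesis
          unfolding A_def B_def C_def c_def \<Phi>_def using vz[OF False] p ps_pos by simp
      qed
      have AA': "AE x in lborel. A x = A' x"
        using uniq
      proof eventually_elim
        case (elim x)
        show ?case
        proof (cases "x \<in> \<Omega>")
          case True
          then have "gt x = t *\<^sub>R gv x" using elim OR by auto
          then show ?thesis unfolding A_def A'_def using True t by (simp add: powr_mult)
        next
          case False then show ?thesis unfolding A_def A'_def by simp
        qed
      qed
      have intA': "integrable lborel A'"
        unfolding A'_def using integrable_mult_indicator[OF Os, of "\<lambda>x. t powr p / p * norm (gv x) powr p"] intI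
        by simp
      have mA: "A \<in> borel_measurable lborel" unfolding A_def using mgt Os by measurable
      have intA: "integrable lborel A"
        using intA' integrable_cong_AE[OF mA _ AA'] borel_measurable_integrable[OF intA'] by simp
      have intA_eq: "(\<integral>x. A x \<partial>lborel) = (\<integral>x. A' x \<partial>lborel)"
        by (rule integral_cong_AE[OF mA borel_measurable_integrable[OF intA'] AA'])
      have A'le: "(\<integral>x. A' x \<partial>lborel) \<le> t powr p"
      proof -
        have "(\<integral>x. A' x \<partial>lborel) \<le> (\<integral>x. t powr p / p * norm (gv x) powr p \<partial>lborel)"
          by (rule integral_mono[OF intA']) (use intI p in \<open>auto simp: A'_def indicator_def\<close>)
        also have "\<dots> = t powr p / p * I" unfolding I_def by simp
        also have "\<dots> = t powr p" using Ip p by simp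
        finally show ?thesis .
      qed
      have intB: "integrable lborel B" unfolding B_def using intL by simp
      have intB_eq: "(\<integral>x. B x \<partial>lborel) = lm / p * t powr p * L"
        unfolding B_def L_def Lp_pow_def by simp
      have intC: "integrable lborel C"
      proof -
        have "integrable lborel (\<lambda>x. A x - B x - indicator \<Omega> x *\<^sub>R \<Phi> x)" using intA intB True by auto
        moreover have "(\<lambda>x. A x - B x - indicator \<Omega> x *\<^sub>R \<Phi> x) = C"
        proof
          fix x show "A x - B x - indicator \<Omega> x *\<^sub>R \<Phi> x = C x" unfolding split[of x] by simp
        qed
        ultimately show ?thesis by simp
      qed
      define Cv where "Cv = (\<integral>x. C x \<partial>lborel)"
      have c0: "c x \<ge> 0" for x unfolding c_def by simp
      have Cv0: "Cv \<ge> 0" unfolding Cv_def C_def using c0 ps_pos by (intro integral_nonneg_AE AE_I2) auto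
      have E0le: "E0 \<Omega> p \<sigma> lm (\<lambda>x. t * v x) \<le> t powr p * (1 - lm * L / p) - Cv"
      proof -
        have "E0 \<Omega> p \<sigma> lm (\<lambda>x. t * v x) = (\<integral>x. A x - B x - C x \<partial>lborel)" unfolding E0eq split ..
        also have "\<dots> = (\<integral>x. A x \<partial>lborel) - (\<integral>x. B x \<partial>lborel) - Cv" unfolding Cv_def
          using intA intB intC by simp
        also have "\<dots> \<le> t powr p - lm / p * t powr p * L - Cv" using A'le intA_eq intB_eq by simp
        also have "\<dots> = t powr p * (1 - lm * L / p) - Cv" by (simp add: algebra_simps)
        finally show ?thesis .
      qed
      have Cpart: "t > 0 \<longrightarrow> (\<exists>b. Cv = t powr ps / ps * b \<and>
            (\<forall>\<epsilon>>0. L \<le> \<epsilon> powr p * measure lborel \<Omega> + \<epsilon> powr (p - ps) * R powr \<sigma> * b))"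
      proof
        assume tp: "t > 0"
        define b where "b = (\<integral>x. c x \<partial>lborel)"
        have intc: "integrable lborel c"
        proof -
          have "integrable lborel (\<lambda>x. ps / t powr ps * C x)" using intC by simp
          moreover have "(\<lambda>x. ps / t powr ps * C x) = c" unfolding C_def using tp ps_pos by (auto simp: fun_eq_iff)
          ultimately show ?thesis by simp
        qed
        have Cvb: "Cv = t powr ps / ps * b" unfolding Cv_def C_def b_def by simp
        have "L \<le> \<epsilon> powr p * measure lborel \<Omega> + \<epsilon> powr (p - ps) * R powr \<sigma> * b" if e: "\<epsilon> > 0" for \<epsilon>
        proof -
          have pps: "p < ps" unfolding ps_def using pN \<sigma> p
            by (simp add: divide_simps)
          have fin: "emeasure lborel \<Omega> < \<infinity>"
            using emeasure_mono[OF OR, of lborel] emeasure_compact_finite[of ?K] by (simp add: top.extremum_strict le_less_trans)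
          have intI\<Omega>: "integrable lborel (indicat_real \<Omega>)" by (rule integrable_real_indicator[OF Os fin])
          have "L = (\<integral>x. \<bar>v x\<bar> powr p \<partial>lborel)" unfolding L_def Lp_pow_def ..
          also have "\<dots> \<le> (\<integral>x. \<epsilon> powr p * indicator \<Omega> x + \<epsilon> powr (p - ps) * R powr \<sigma> * c x \<partial>lborel)"
          proof (rule integral_mono_AE[OF intL])
            show "integrable lborel (\<lambda>x. \<epsilon> powr p * indicator \<Omega> x + \<epsilon> powr (p - ps) * R powr \<sigma> * c x)"
              using intI\<Omega> intc by simp
            show "AE x in lborel. \<bar>v x\<bar> powr p \<le> \<epsilon> powr p * indicator \<Omega> x + \<epsilon> powr (p - ps) * R powr \<sigma> * c x"
              using AE_lborel_singleton[of 0]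
            proof eventually_elim
              case (elim x)
              show ?case
              proof (cases "x \<in> \<Omega>")
                case True
                then have "norm x \<le> R" using OR by auto
                then show ?thesis unfolding c_def using True elim pw2[OF e pps \<sigma>(1), of "norm x" R "\<bar>v x\<bar>"] p by simp
              next
                case False then show ?thesis unfolding c_def using vz[OF False] p c0 by simp
              qed
            qed
          qed
          also have "\<dots> = \<epsilon> powr p * measure lborel \<Omega> + \<epsilon> powr (p - ps) * R powr \<sigma> * b"
            unfolding b_def using intI\<Omega> intc by simp
          finally show ?thesis .
        qed
        then show "\<exists>b. Cv = t powr ps / ps * b \<and>
            (\<forall>\<epsilon>>0. L \<le> \<epsilon> powr p * measure lborel \<Omega> + \<epsilon> powr (p - ps) * R powr \<sigma> * b)"
          using Cvb by blast
      qed
      show ?thesis using Cv0 E0le Cpart by blast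
    qed
  qed
qed

lemma frac_helper:
  fixes A B D p :: real
  assumes "D \<noteq> 0" "p \<noteq> 0"
  shows "(A * p / D) / (p * B / D) = A / B"
  using assms by (simp add: divide_simps)

theorem lemma2p8:
  fixes \<Omega> :: "'a::euclidean_space set"
    and p \<sigma> lm c\<^sub>1 :: real and k :: nat
    and C\<^sub>0 :: "('a \<Rightarrow> real) set" and \<eta> :: "real \<Rightarrow> real"
  assumes "open \<Omega>" "connected \<Omega>" "bounded \<Omega>" "0 \<in> \<Omega>"
    and "1 < p" "p < real DIM('a)" "0 < \<sigma>" "\<sigma> < p"
    and "k \<ge> 1"
    and "lam \<Omega> p k < lam \<Omega> p (Suc k)"
    and "lam \<Omega> p k \<le> ereal lm" "ereal lm < lam \<Omega> p (Suc k)"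
    \<comment> \<open>the set C_0\<close>
    and "C\<^sub>0 \<subseteq> sublevel \<Omega> p (real_of_ereal (lam \<Omega> p k))"
    and "symmetric_set C\<^sub>0"
    and "\<forall>s::nat \<Rightarrow> 'a \<Rightarrow> real. (\<forall>n. s n \<in> C\<^sub>0) \<longrightarrow>
           (\<exists>l\<in>C\<^sub>0. \<exists>r. strict_mono r \<and> (\<lambda>n. distW \<Omega> p (s (r n)) l) \<longlonglongrightarrow> 0)"
    and "fr_index (distW \<Omega> p) C\<^sub>0 = enat k"
    and "\<exists>M. \<forall>u\<in>C\<^sub>0. AE x in lborel. \<bar>u x\<bar> \<le> M"
    and "\<forall>u\<in>C\<^sub>0. Ck_on \<Omega> 1 u"
    and "\<forall>K. compact K \<and> K \<subseteq> \<Omega> \<longrightarrow>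
           (\<exists>M. \<forall>u\<in>C\<^sub>0. \<forall>x\<in>K. \<bar>u x\<bar> \<le> M \<and> norm (grad u x) \<le> M)"
    \<comment> \<open>the cut-off \<eta>\<close>
    and "smooth_fun_on {0<..} \<eta>"
    and "\<forall>s\<ge>0. 0 \<le> \<eta> s \<and> \<eta> s \<le> 1"
    and "\<forall>s\<in>{0..3/4}. \<eta> s = 0" "\<forall>s\<ge>1. \<eta> s = 1"
    \<comment> \<open>the constant c_1, with \<rho>_0 = dist(0, \<partial>\<Omega>) and C_\<rho> = \<pi>_M(u_\<rho>), u \<in> C_0\<close>
    and "c\<^sub>1 > 0"
    and "\<forall>\<rho>. 0 < \<rho> \<and> \<rho> \<le> infdist 0 (frontier \<Omega>) / 2 \<longrightarrow>
           (\<lambda>u. piM \<Omega> p (\<lambda>x. \<eta> (norm x / \<rho>) * u x)) ` C\<^sub>0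
             \<subseteq> sublevel \<Omega> p (real_of_ereal (lam \<Omega> p k) + c\<^sub>1 * \<rho> powr (real DIM('a) - p))"
  shows "\<exists>c\<^sub>1\<^sub>3>0. \<forall>\<rho>. 0 < \<rho> \<and> \<rho> \<le> infdist 0 (frontier \<Omega>) / 2 \<longrightarrow>
           (\<forall>v\<in>(\<lambda>u. piM \<Omega> p (\<lambda>x. \<eta> (norm x / \<rho>) * u x)) ` C\<^sub>0. \<forall>t\<ge>0.
              (real_of_ereal (lam \<Omega> p k) + c\<^sub>1 * \<rho> powr (real DIM('a) - p) \<le> lm
                 \<longrightarrow> E0 \<Omega> p \<sigma> lm (\<lambda>x. t * v x) \<le> 0) \<and>
              (ereal lm = lam \<Omega> p k
                 \<longrightarrow> E0 \<Omega> p \<sigma> lm (\<lambda>x. t * v x)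
                       \<le> c\<^sub>1\<^sub>3 * \<rho> powr ((real DIM('a) - \<sigma>) * (real DIM('a) - p) / (p - \<sigma>))))"
proof -
  let ?N = "real DIM('a)"
  define ps where "ps = (?N - \<sigma>) * p / (?N - p)"
  have p0: "p > 0" using assms(5) by simp
  have pps: "p < ps" unfolding ps_def using assms(6,7,8) p0 by (simp add: divide_simps)
  obtain R where R: "R > 0" "\<Omega> \<subseteq> ball 0 R" using bounded_subset_ballD[OF assms(3)] by blast
  have OR: "\<Omega> \<subseteq> cball 0 R" using R(2) by auto
  define V where "V = measure lborel \<Omega>"
  have V0: "V \<ge> 0" unfolding V_def by simp
  define q where "q = ps - p"
  define \<beta> where "\<beta> = ((1/2 * (2 * (V + 1)) powr (- ((ps - p) / p)) * R powr (- \<sigma>)) / ps) powr (- p / (ps - p))"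
  define c13 where "c13 = (c\<^sub>1 / p) powr (ps / (ps - p)) * \<beta> + 1"
  have \<beta>0: "\<beta> \<ge> 0" unfolding \<beta>_def by simp
  have c13: "c13 > 0" unfolding c13_def using \<beta>0 by (simp add: add_nonneg_pos)
  show ?thesis
  proof (intro exI[of _ c13] conjI c13 allI impI ballI)
    fix \<rho> :: real and v :: "'a \<Rightarrow> real" and t :: real
    assume \<rho>: "0 < \<rho> \<and> \<rho> \<le> infdist 0 (frontier \<Omega>) / 2"
      and v: "v \<in> (\<lambda>u. piM \<Omega> p (\<lambda>x. \<eta> (norm x / \<rho>) * u x)) ` C\<^sub>0" and t: "0 \<le> t"
    define \<Lambda> where "\<Lambda> = real_of_ereal (lam \<Omega> p k) + c\<^sub>1 * \<rho> powr (?N - p)"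
    have vs: "v \<in> sublevel \<Omega> p \<Lambda>" using assms(25) \<rho> v unfolding \<Lambda>_def by blast
    then have vM: "v \<in> Mfd \<Omega> p" and Psi: "Psi p v \<le> \<Lambda>" unfolding sublevel_def by auto
    obtain L where L: "L > 0" "p \<le> \<Lambda> * L" and disj: "E0 \<Omega> p \<sigma> lm (\<lambda>x. t * v x) = 0 \<or>
     (\<exists>Cv\<ge>0. E0 \<Omega> p \<sigma> lm (\<lambda>x. t * v x) \<le> t powr p * (1 - lm * L / p) - Cv \<and>
        (t > 0 \<longrightarrow> (\<exists>b. Cv = t powr ps / ps * b \<and>
            (\<forall>\<epsilon>>0. L \<le> \<epsilon> powr p * measure lborel \<Omega> + \<epsilon> powr (p - ps) * R powr \<sigma> * b))))"
      using energy[OF assms(1) OR assms(5) assms(6) assms(7) assms(8) vM Psi t ps_def] by blast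
    show "E0 \<Omega> p \<sigma> lm (\<lambda>x. t * v x) \<le> 0" if "real_of_ereal (lam \<Omega> p k) + c\<^sub>1 * \<rho> powr (?N - p) \<le> lm"
    proof -
      from that have Ll: "\<Lambda> \<le> lm" unfolding \<Lambda>_def .
      have "p \<le> lm * L" using L Ll by (meson dual_order.trans less_le mult_right_mono)
      then have neg: "1 - lm * L / p \<le> 0" using p0 by (simp add: divide_simps)
      show "E0 \<Omega> p \<sigma> lm (\<lambda>x. t * v x) \<le> 0"
      proof (cases "E0 \<Omega> p \<sigma> lm (\<lambda>x. t * v x) = 0")
        case False
        then obtain Cv where "Cv \<ge> 0" "E0 \<Omega> p \<sigma> lm (\<lambda>x. t * v x) \<le> t powr p * (1 - lm * L / p) - Cv"
          using disj by blast
        moreover have "t powr p * (1 - lm * L / p) \<le> 0" using neg by (simp add: mult_nonneg_nonpos)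
        ultimately show ?thesis by linarith
      qed simp
    qed
    show "E0 \<Omega> p \<sigma> lm (\<lambda>x. t * v x)
                       \<le> c13 * \<rho> powr ((?N - \<sigma>) * (?N - p) / (p - \<sigma>))" if lmk: "ereal lm = lam \<Omega> p k"
    proof -
      from lmk have rl: "real_of_ereal (lam \<Omega> p k) = lm" by (metis real_of_ereal.simps(1))
      define a where "a = c\<^sub>1 * \<rho> powr (?N - p)"
      have a0: "a \<ge> 0" unfolding a_def using assms(24) by simp
      have La: "p \<le> (lm + a) * L" using L(2) unfolding \<Lambda>_def a_def rl .
      have rhs0: "0 \<le> c13 * \<rho> powr ((?N - \<sigma>) * (?N - p) / (p - \<sigma>))" using c13 by simp
      show "E0 \<Omega> p \<sigma> lm (\<lambda>x. t * v x) \<le> c13 * \<rho> powr ((?N - \<sigma>) * (?N - p) / (p - \<sigma>))"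
      proof (cases "E0 \<Omega> p \<sigma> lm (\<lambda>x. t * v x) = 0")
        case True then show ?thesis using rhs0 by simp
      next
        case False
        then obtain Cv where Cv: "Cv \<ge> 0" "E0 \<Omega> p \<sigma> lm (\<lambda>x. t * v x) \<le> t powr p * (1 - lm * L / p) - Cv"
          and Cvt: "t > 0 \<longrightarrow> (\<exists>b. Cv = t powr ps / ps * b \<and>
            (\<forall>\<epsilon>>0. L \<le> \<epsilon> powr p * measure lborel \<Omega> + \<epsilon> powr (p - ps) * R powr \<sigma> * b))"
          using disj by blast
        show ?thesis
        proof (cases "t = 0")
          case True
          then show ?thesis using Cv rhs0 p0 by simp
        next
          case False
          then have tp: "t > 0" using t by simp
          then obtain b where b: "Cv = t powr ps / ps * b"
            and ineq: "\<And>\<epsilon>. \<epsilon> > 0 \<Longrightarrow> L \<le> \<epsilon> powr p * V + \<epsilon> powr (p - ps) * R powr \<sigma> * b"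
            using Cvt unfolding V_def by blast
          have one': "p - lm * L \<le> a * L" using La by (simp add: algebra_simps)
          have "1 - lm * L / p = (p - lm * L) / p" using p0 by (simp add: field_simps)
          also have "\<dots> \<le> a * L / p" using one' p0 by (intro divide_right_mono) auto
          finally have one: "1 - lm * L / p \<le> a * L / p" .
          have E: "E0 \<Omega> p \<sigma> lm (\<lambda>x. t * v x) \<le> t powr p * (a * L / p) - t powr ps / ps * b"
          proof -
            have "t powr p * (1 - lm * L / p) \<le> t powr p * (a * L / p)"
              using one by (intro mult_left_mono) auto
            then show ?thesis using Cv(2) b by linarith
          qed
          have fb: "E0 \<Omega> p \<sigma> lm (\<lambda>x. t * v x) \<le> (a / p) powr (ps / (ps - p)) * \<beta>"
            unfolding \<beta>_def
            by (rule final_bound[OF L(1) tp p0 pps V0 _ _ R(1) a0 ineq E]) (use V0 in auto)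
          have ex: "(?N - p) * (ps / (ps - p)) = (?N - \<sigma>) * (?N - p) / (p - \<sigma>)"
          proof -
            have nz: "?N - p \<noteq> 0" "p - \<sigma> \<noteq> 0" "p \<noteq> 0" using assms(6,8) p0 by auto
            have d1: "ps - p = p * (p - \<sigma>) / (?N - p)" unfolding ps_def using nz by (simp add: field_simps)
            have "ps / (ps - p) = ((?N - \<sigma>) * p / (?N - p)) / (p * (p - \<sigma>) / (?N - p))"
              unfolding d1 unfolding ps_def ..
            also have "\<dots> = (?N - \<sigma>) / (p - \<sigma>)" by (rule frac_helper[OF nz(1) nz(3)])
            finally show ?thesis by simp
          qed
          have "(a / p) powr (ps / (ps - p)) = (c\<^sub>1 / p) powr (ps / (ps - p)) * \<rho> powr ((?N - \<sigma>) * (?N - p) / (p - \<sigma>))"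
          proof -
            have "a / p = (c\<^sub>1 / p) * \<rho> powr (?N - p)" unfolding a_def by simp
            then have "(a / p) powr (ps / (ps - p)) = ((c\<^sub>1 / p) * \<rho> powr (?N - p)) powr (ps / (ps - p))"
              by (simp only:)
            also have "\<dots> = (c\<^sub>1 / p) powr (ps / (ps - p)) * (\<rho> powr (?N - p)) powr (ps / (ps - p))"
              by (rule powr_mult)
            also have "(\<rho> powr (?N - p)) powr (ps / (ps - p)) = \<rho> powr ((?N - \<sigma>) * (?N - p) / (p - \<sigma>))"
              by (simp only: powr_powr ex)
            finally show ?thesis .
          qed
          then have "E0 \<Omega> p \<sigma> lm (\<lambda>x. t * v x) \<le> ((c\<^sub>1 / p) powr (ps / (ps - p)) * \<beta>) * \<rho> powr ((?N - \<sigma>) * (?N - p) / (p - \<sigma>))"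
            using fb by (simp add: algebra_simps)
          also have "\<dots> \<le> c13 * \<rho> powr ((?N - \<sigma>) * (?N - p) / (p - \<sigma>))"
            unfolding c13_def by (intro mult_right_mono) auto
          finally show ?thesis .
        qed
      qed
    qed
  qed
qed

end
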